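(* Let $(\mathcal{M},g)$ be a Ricci-flat $D$-dimensional manifold whose metric, in coordinates $(x^1,\dots,x^{D-2},u,v)$, has the form $ds^2=\sum_{i,j=1}^{D-2}G_{ij}dx^idx^j+C(du^2+dv^2)$ with $C$ and $G_{ij}$ depending only on $(u,v)$ on a simply connected domain. Let $f=\sqrt{|\det(G_{ij})|}$. Then either $f$ is constant, or $(\partial f/\partial u,\partial f/\partial v)\neq(0,0)$ except at isolated points. *)

theory Defs
  imports "HOL-Analysis.Analysis" "HOL-Combinatorics.Permutations"
begin

text \<open>Points of the coordinate domain are functions nat => real; only the coordinates
  0..D-1 are meaningful. A metric in coordinates is a family of component functions
  g a b p (a, b < D).\<close>

definition pd :: "nat \<Rightarrow> ((nat \<Rightarrow> real) \<Rightarrow> real) \<Rightarrow> (nat \<Rightarrow> real) \<Rightarrow> real" where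
  "pd a F p = deriv (\<lambda>t. F (p(a := t))) (p a)"

definition inv_metric :: "nat \<Rightarrow> (nat \<Rightarrow> nat \<Rightarrow> (nat \<Rightarrow> real) \<Rightarrow> real) \<Rightarrow> nat \<Rightarrow> nat \<Rightarrow> (nat \<Rightarrow> real) \<Rightarrow> real" where
  "inv_metric D g a b p =
     (SOME h. \<forall>i<D. \<forall>j<D. (\<Sum>c<D. g i c p * h c j) = (if i = j then 1 else 0)) a b"

definition christoffel :: "nat \<Rightarrow> (nat \<Rightarrow> nat \<Rightarrow> (nat \<Rightarrow> real) \<Rightarrow> real) \<Rightarrow> nat \<Rightarrow> nat \<Rightarrow> nat \<Rightarrow> (nat \<Rightarrow> real) \<Rightarrow> real" where
  "christoffel D g a b c p =
     (1/2) * (\<Sum>d<D. inv_metric D g a d p *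
        (pd b (g d c) p + pd c (g d b) p - pd d (g b c) p))"

definition ricci :: "nat \<Rightarrow> (nat \<Rightarrow> nat \<Rightarrow> (nat \<Rightarrow> real) \<Rightarrow> real) \<Rightarrow> nat \<Rightarrow> nat \<Rightarrow> (nat \<Rightarrow> real) \<Rightarrow> real" where
  "ricci D g b d p =
     (\<Sum>a<D. pd a (christoffel D g a b d) p)
     - (\<Sum>a<D. pd d (christoffel D g a b a) p)
     + (\<Sum>a<D. \<Sum>e<D. christoffel D g a a e p * christoffel D g e b d p)
     - (\<Sum>a<D. \<Sum>e<D. christoffel D g a d e p * christoffel D g e b a p)"

definition pu :: "(real \<times> real \<Rightarrow> real) \<Rightarrow> real \<times> real \<Rightarrow> real" where
  "pu f w = deriv (\<lambda>t. f (t, snd w)) (fst w)"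

definition pv :: "(real \<times> real \<Rightarrow> real) \<Rightarrow> real \<times> real \<Rightarrow> real" where
  "pv f w = deriv (\<lambda>t. f (fst w, t)) (snd w)"

fun Ck_on :: "nat \<Rightarrow> (real \<times> real) set \<Rightarrow> (real \<times> real \<Rightarrow> real) \<Rightarrow> bool" where
  "Ck_on 0 S f = continuous_on S f"
| "Ck_on (Suc k) S f = (f differentiable_on S \<and> Ck_on k S (pu f) \<and> Ck_on k S (pv f))"

definition smooth2_on :: "(real \<times> real) set \<Rightarrow> (real \<times> real \<Rightarrow> real) \<Rightarrow> bool" where
  "smooth2_on S f = (\<forall>k. Ck_on k S f)"

definition detn :: "nat \<Rightarrow> (nat \<Rightarrow> nat \<Rightarrow> real) \<Rightarrow> real" where
  "detn n A = (\<Sum>\<sigma> | \<sigma> permutes {..<n}. of_int (sign \<sigma>) * (\<Prod>i<n. A i (\<sigma> i)))"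

text \<open>The metric ds^2 = sum G_ij dx^i dx^j + C (du^2 + dv^2) in coordinates
  (x^0..x^{n-1}, u = x^n, v = x^{n+1}), D = n + 2.\<close>
definition warped_metric :: "nat \<Rightarrow> (nat \<Rightarrow> nat \<Rightarrow> real \<times> real \<Rightarrow> real) \<Rightarrow> (real \<times> real \<Rightarrow> real)
    \<Rightarrow> nat \<Rightarrow> nat \<Rightarrow> (nat \<Rightarrow> real) \<Rightarrow> real" where
  "warped_metric n G C a b p =
     (if a < n \<and> b < n then G a b (p n, p (Suc n))
      else if a = b \<and> (a = n \<or> a = Suc n) then C (p n, p (Suc n))
      else 0)"

end

theory Submission
  imports Defs "Jordan_Normal_Form.Determinant" "HOL-Complex_Analysis.Complex_Analysis"
begin


definition line :: "bool \<Rightarrow> real \<times> real \<Rightarrow> real \<Rightarrow> real \<times> real" where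
  "line b w s = (if b then (s, snd w) else (fst w, s))"
definition pos :: "bool \<Rightarrow> real \<times> real \<Rightarrow> real" where
  "pos b w = (if b then fst w else snd w)"
definition pdir :: "bool \<Rightarrow> (real \<times> real \<Rightarrow> real) \<Rightarrow> real \<times> real \<Rightarrow> real" where
  "pdir b H w = (if b then pu H w else pv H w)"

lemma line_line[simp]: "line b (line b w s) s' = line b w s'"
  by (simp add: line_def)
lemma pos_line[simp]: "pos b (line b w s) = s"
  by (simp add: line_def pos_def)
lemma line_pos[simp]: "line b w (pos b w) = w"
  by (simp add: line_def pos_def)

lemma pdir_deriv: "pdir b H w = deriv (\<lambda>s. H (line b w s)) (pos b w)"
  by (cases b) (simp_all add: pdir_def pu_def pv_def line_def pos_def)

lemma line_has_derivative:
  "((line b w) has_derivative (\<lambda>h. if b then (h, 0) else (0, h))) (at s)"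
  by (cases b) (auto simp: line_def [abs_def] intro!: derivative_eq_intros)

lemma line_differentiable: "(line b w) differentiable (at s)"
  using line_has_derivative differentiable_def by blast

lemma dir_deriv:
  assumes "H differentiable (at (line b w s))"
  shows "((\<lambda>s. H (line b w s)) has_real_derivative pdir b H (line b w s)) (at s)"
proof -
  have "(H \<circ> line b w) differentiable (at s)"
    by (rule differentiable_chain_at[OF line_differentiable assms])
  then have "((\<lambda>s. H (line b w s)) has_real_derivative deriv (\<lambda>s. H (line b w s)) s) (at s)"
    by (simp add: DERIV_deriv_iff_real_differentiable o_def)
  moreover have "deriv (\<lambda>s. H (line b w s)) s = pdir b H (line b w s)"
    by (simp add: pdir_deriv)
  ultimately show ?thesis by simp
qed

lemma frechet_partials:
  assumes "H differentiable (at w)"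
  shows "(H has_derivative (\<lambda>h. pu H w * fst h + pv H w * snd h)) (at w)"
proof -
  obtain D where D: "(H has_derivative D) (at w)" using assms differentiable_def by blast
  have lin: "linear D" using D has_derivative_linear by blast
  have e: "D h = fst h * D (1,0) + snd h * D (0,1)" for h
  proof -
    have "h = fst h *\<^sub>R (1,0) + snd h *\<^sub>R (0,1)" by (cases h) simp
    then have "D h = D (fst h *\<^sub>R (1,0) + snd h *\<^sub>R (0,1))" by simp
    also have "\<dots> = fst h * D (1,0) + snd h * D (0,1)"
      by (subst linear_add[OF lin], subst linear_scale[OF lin], subst linear_scale[OF lin]) simp
    finally show ?thesis .
  qed
  have "D (1,0) = pdir True H w \<and> D (0,1) = pdir False H w"
  proof -
    have "((\<lambda>s. H (line b w s)) has_derivative (D \<circ> (\<lambda>h. if b then (h, 0) else (0, h)))) (at (pos b w))" for b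
      using diff_chain_at[OF line_has_derivative, of H D b w "pos b w"] D by (simp add: o_def)
    moreover have "(\<lambda>x. D (if b then (x,0) else (0,x))) = (\<lambda>x. x * (if b then D (1,0) else D (0,1)))" for b
    proof (rule ext)
      fix x
      show "D (if b then (x,0) else (0,x)) = x * (if b then D (1,0) else D (0,1))"
        using linear_scale[OF lin, of x "(1,0)"] linear_scale[OF lin, of x "(0,1)"] by (cases b) simp_all
    qed
    ultimately have "((\<lambda>s. H (line b w s)) has_real_derivative (if b then D (1,0) else D (0,1))) (at (pos b w))" for b
      unfolding has_field_derivative_def
    proof -
      fix b
      assume a1: "\<And>b. ((\<lambda>s. H (line b w s)) has_derivative D \<circ> (\<lambda>h. if b then (h, 0) else (0, h))) (at (pos b w))"
        and a2: "\<And>b. (\<lambda>x. D (if b then (x,0) else (0,x))) = (\<lambda>x. x * (if b then D (1,0) else D (0,1)))"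
      have "D \<circ> (\<lambda>h. if b then (h, 0) else (0, h)) = (*) (if b then D (1,0) else D (0,1))"
      proof (rule ext)
        fix x
        show "(D \<circ> (\<lambda>h. if b then (h, 0) else (0, h))) x = (if b then D (1,0) else D (0,1)) * x"
          using fun_cong[OF a2[of b], of x] by (simp only: o_def mult.commute)
      qed
      then show "((\<lambda>s. H (line b w s)) has_derivative (*) (if b then D (1,0) else D (0,1))) (at (pos b w))"
        using a1[of b] by simp
    qed
    moreover have "((\<lambda>s. H (line b w s)) has_real_derivative pdir b H w) (at (pos b w))" for b
      using dir_deriv[of H b w "pos b w"] assms by simp
    ultimately show ?thesis
      by (metis DERIV_unique)
  qed
  then have "D = (\<lambda>h. pu H w * fst h + pv H w * snd h)"
  proof (intro ext)
    fix h
    assume "D (1,0) = pdir True H w \<and> D (0,1) = pdir False H w"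
    then show "D h = pu H w * fst h + pv H w * snd h"
      using e[of h] by (simp add: pdir_def mult.commute)
  qed
  then show ?thesis
    using D by simp
qed



abbreviation matf :: "nat \<Rightarrow> (nat \<Rightarrow> nat \<Rightarrow> real) \<Rightarrow> real mat" where
  "matf n A \<equiv> mat n n (\<lambda>(i,j). A i j)"

lemma detn_eq: "detn n A = Determinant.det (matf n A)"
proof -
  have "Determinant.det (matf n A) = (\<Sum>p | p permutes {0..<n}. of_int (sign p) * (\<Prod>i = 0..<n. matf n A $$ (i, p i)))"
    by (rule det_def') simp
  also have "\<dots> = (\<Sum>p | p permutes {..<n}. of_int (sign p) * (\<Prod>i<n. A i (p i)))"
    by (rule sum.cong) (auto simp: atLeast0LessThan permutes_in_image intro!: prod.cong)
  finally show ?thesis by (simp add: detn_def)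
qed

lemma det_leibniz: "Determinant.det (matf n A) = (\<Sum>p | p permutes {..<n}. of_int (sign p) * (\<Prod>i<n. A i (p i)))"
  using detn_eq[of n A] by (simp add: detn_def)

lemma cofactor_row_indep:
  assumes "k < n" "j < n"
  shows "cofactor (mat n n (\<lambda>(i,j'). if i = k then R j' else A i j')) k j = cofactor (matf n A) k j"
  unfolding cofactor_def
  by (rule arg_cong[where f="\<lambda>M. (-1)^(k+j) * Determinant.det M"]) (auto simp: mat_delete_def)

lemma det_deriv:
  assumes "\<And>i j. i < n \<Longrightarrow> j < n \<Longrightarrow> ((\<lambda>s. F i j s) has_real_derivative F' i j) (at t)"
  shows "((\<lambda>s. Determinant.det (matf n (\<lambda>i j. F i j s))) has_real_derivative
           (\<Sum>i<n. \<Sum>j<n. F' i j * cofactor (matf n (\<lambda>i j. F i j t)) i j)) (at t)"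
proof -
  let ?P = "{p. p permutes {..<n}}"
  have fin: "finite ?P" by (simp add: finite_permutations)
  have "((\<lambda>s. \<Sum>p\<in>?P. of_int (sign p) * (\<Prod>i<n. F i (p i) s)) has_real_derivative
      (\<Sum>p\<in>?P. of_int (sign p) * (\<Sum>k<n. F' k (p k) * (\<Prod>i\<in>{..<n}-{k}. F i (p i) t)))) (at t)"
    apply (intro DERIV_sum DERIV_cmult has_field_derivative_prod)
    apply (rule assms)
    by (auto simp: permutes_in_image)
       (metis lessThan_iff permutes_in_image)
  moreover have "(\<Sum>p\<in>?P. of_int (sign p) * (\<Sum>k<n. F' k (p k) * (\<Prod>i\<in>{..<n}-{k}. F i (p i) t)))
     = (\<Sum>k<n. \<Sum>j<n. F' k j * cofactor (matf n (\<lambda>i j. F i j t)) k j)"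
  proof -
    have "(\<Sum>p\<in>?P. of_int (sign p) * (\<Sum>k<n. F' k (p k) * (\<Prod>i\<in>{..<n}-{k}. F i (p i) t)))
        = (\<Sum>k<n. \<Sum>p\<in>?P. of_int (sign p) * (\<Prod>i<n. (if i = k then F' i (p i) else F i (p i) t)))"
    proof -
      have "(\<Prod>i<n. (if i = k then F' i (p i) else F i (p i) t)) = F' k (p k) * (\<Prod>i\<in>{..<n}-{k}. F i (p i) t)"
        if "k < n" for k p
      proof -
        have "(\<Prod>i<n. (if i = k then F' i (p i) else F i (p i) t))
            = (if k = k then F' k (p k) else F k (p k) t) * (\<Prod>i\<in>{..<n}-{k}. (if i = k then F' i (p i) else F i (p i) t))"
          using that by (subst prod.remove[of _ k]) auto
        also have "\<dots> = F' k (p k) * (\<Prod>i\<in>{..<n}-{k}. F i (p i) t)"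
          by (auto intro!: prod.cong)
        finally show ?thesis .
      qed
      then show ?thesis
        by (subst sum.swap) (simp add: sum_distrib_left)
    qed
    also have "\<dots> = (\<Sum>k<n. Determinant.det (matf n (\<lambda>i j. if i = k then F' i j else F i j t)))"
      by (simp add: det_leibniz if_distrib cong: if_cong)
    also have "\<dots> = (\<Sum>k<n. \<Sum>j<n. F' k j * cofactor (matf n (\<lambda>i j. F i j t)) k j)"
    proof (rule sum.cong[OF refl])
      fix k assume k: "k \<in> {..<n}"
      have "Determinant.det (matf n (\<lambda>i j. if i = k then F' i j else F i j t))
          = (\<Sum>j<n. matf n (\<lambda>i j. if i = k then F' i j else F i j t) $$ (k,j) *
                    cofactor (matf n (\<lambda>i j. if i = k then F' i j else F i j t)) k j)"
        by (rule laplace_expansion_row) (use k in auto)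
      also have "\<dots> = (\<Sum>j<n. F' k j * cofactor (matf n (\<lambda>i j. F i j t)) k j)"
      proof (rule sum.cong[OF refl])
        fix j assume j: "j \<in> {..<n}"
        have "cofactor (matf n (\<lambda>i j. if i = k then F' i j else F i j t)) k j
            = cofactor (mat n n (\<lambda>(i,j'). if i = k then F' k j' else F i j' t)) k j"
          by (rule arg_cong[where f="\<lambda>M. cofactor M k j"]) auto
        also have "\<dots> = cofactor (matf n (\<lambda>i j. F i j t)) k j"
          using k j by (intro cofactor_row_indep) auto
        finally show "matf n (\<lambda>i j. if i = k then F' i j else F i j t) $$ (k,j) *
                    cofactor (matf n (\<lambda>i j. if i = k then F' i j else F i j t)) k j
            = F' k j * cofactor (matf n (\<lambda>i j. F i j t)) k j"
          using k j by simp
      qed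
      finally show "Determinant.det (matf n (\<lambda>i j. if i = k then F' i j else F i j t))
          = (\<Sum>j<n. F' k j * cofactor (matf n (\<lambda>i j. F i j t)) k j)" .
    qed
    finally show ?thesis .
  qed
  ultimately show ?thesis
    by (simp add: det_leibniz)
qed



lemma differentiable_prod':
  fixes f :: "'i \<Rightarrow> 'a::real_normed_vector \<Rightarrow> real"
  assumes "\<And>i. i \<in> I \<Longrightarrow> f i differentiable (at x)"
  shows "(\<lambda>x. \<Prod>i\<in>I. f i x) differentiable (at x)"
proof -
  obtain D where "\<And>i. i \<in> I \<Longrightarrow> (f i has_derivative D i) (at x)"
    using assms unfolding differentiable_def by metis
  then show ?thesis unfolding differentiable_def by (blast intro: has_derivative_prod)
qed

lemma det_differentiable:
  fixes F :: "nat \<Rightarrow> nat \<Rightarrow> 'a::real_normed_vector \<Rightarrow> real"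
  assumes "\<And>i j. i < n \<Longrightarrow> j < n \<Longrightarrow> F i j differentiable (at x)"
  shows "(\<lambda>y. Determinant.det (matf n (\<lambda>i j. F i j y))) differentiable (at x)"
  unfolding det_leibniz
  apply (intro differentiable_sum ballI differentiable_mult differentiable_const differentiable_prod')
   apply (simp add: finite_permutations)
  apply (rule assms)
  by (auto simp: permutes_in_image) (metis lessThan_iff permutes_in_image)

lemma mat_delete_matf:
  assumes "a < n" "b < n"
  shows "mat_delete (matf n A) a b = matf (n - 1) (\<lambda>i j. A (if i < a then i else Suc i) (if j < b then j else Suc j))"
  using assms by (auto simp: mat_delete_def)

lemma cofactor_differentiable:
  fixes F :: "nat \<Rightarrow> nat \<Rightarrow> 'a::real_normed_vector \<Rightarrow> real"
  assumes "\<And>i j. i < n \<Longrightarrow> j < n \<Longrightarrow> F i j differentiable (at x)" "a < n" "b < n"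
  shows "(\<lambda>y. cofactor (matf n (\<lambda>i j. F i j y)) a b) differentiable (at x)"
proof -
  have "(\<lambda>y. Determinant.det (matf (n - 1) (\<lambda>i j. F (if i < a then i else Suc i) (if j < b then j else Suc j) y)))
     differentiable (at x)"
    by (rule det_differentiable, rule assms) (use assms in auto)
  then show ?thesis
    unfolding cofactor_def using assms by (simp add: mat_delete_matf)
qed

definition invm :: "nat \<Rightarrow> (nat \<Rightarrow> nat \<Rightarrow> real) \<Rightarrow> nat \<Rightarrow> nat \<Rightarrow> real" where
  "invm n A i j = cofactor (matf n A) j i / Determinant.det (matf n A)"

lemma adj_entry_right:
  assumes "i < n" "j < n"
  shows "(\<Sum>k<n. A i k * cofactor (matf n A) j k) = (if i = j then Determinant.det (matf n A) else 0)"
proof -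
  have "(matf n A * adj_mat (matf n A)) $$ (i,j) = (\<Sum>k<n. A i k * cofactor (matf n A) j k)"
    unfolding times_mat_def scalar_prod_def adj_mat_def using assms by (auto intro: sum.cong)
  moreover have "(matf n A * adj_mat (matf n A)) $$ (i,j) = (if i = j then Determinant.det (matf n A) else 0)"
    using adj_mat(2)[of "matf n A" n] assms by simp
  ultimately show ?thesis by simp
qed

lemma adj_entry_left:
  assumes "i < n" "j < n"
  shows "(\<Sum>k<n. cofactor (matf n A) k i * A k j) = (if i = j then Determinant.det (matf n A) else 0)"
proof -
  have "(adj_mat (matf n A) * matf n A) $$ (i,j) = (\<Sum>k<n. cofactor (matf n A) k i * A k j)"
    unfolding times_mat_def scalar_prod_def adj_mat_def using assms by (auto intro: sum.cong)
  moreover have "(adj_mat (matf n A) * matf n A) $$ (i,j) = (if i = j then Determinant.det (matf n A) else 0)"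
    using adj_mat(3)[of "matf n A" n] assms by simp
  ultimately show ?thesis by simp
qed

lemma invm_right:
  assumes "Determinant.det (matf n A) \<noteq> 0" "i < n" "j < n"
  shows "(\<Sum>k<n. A i k * invm n A k j) = (if i = j then 1 else 0)"
proof -
  have "(\<Sum>k<n. A i k * invm n A k j) = (\<Sum>k<n. A i k * cofactor (matf n A) j k) / Determinant.det (matf n A)"
    by (simp add: invm_def sum_divide_distrib)
  then show ?thesis using adj_entry_right[OF assms(2,3)] assms(1) by simp
qed

lemma invm_left:
  assumes "Determinant.det (matf n A) \<noteq> 0" "i < n" "j < n"
  shows "(\<Sum>k<n. invm n A i k * A k j) = (if i = j then 1 else 0)"
proof -
  have "(\<Sum>k<n. invm n A i k * A k j) = (\<Sum>k<n. cofactor (matf n A) k i * A k j) / Determinant.det (matf n A)"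
    by (simp add: invm_def sum_divide_distrib)
  then show ?thesis using adj_entry_left[OF assms(2,3)] assms(1) by simp
qed

lemma sum_delta_left:
  fixes n :: nat
  assumes "i < n"
  shows "(\<Sum>k<n. (if i = k then 1 else 0) * (X k :: real)) = X i"
proof -
  have "(\<Sum>k<n. (if i = k then 1 else 0) * (X k :: real)) = (\<Sum>k<n. if k = i then X i else 0)"
    by (rule sum.cong) auto
  also have "\<dots> = X i" using assms by (subst sum.delta) auto
  finally show ?thesis .
qed

lemma sum_delta_right:
  fixes n :: nat
  assumes "i < n"
  shows "(\<Sum>k<n. (X k :: real) * (if k = i then 1 else 0)) = X i"
proof -
  have "(\<Sum>k<n. (X k :: real) * (if k = i then 1 else 0)) = (\<Sum>k<n. if k = i then X i else 0)"
    by (rule sum.cong) auto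
  also have "\<dots> = X i" using assms by (subst sum.delta) auto
  finally show ?thesis .
qed

lemma invm_differentiable:
  fixes F :: "nat \<Rightarrow> nat \<Rightarrow> 'a::real_normed_vector \<Rightarrow> real"
  assumes "\<And>i j. i < n \<Longrightarrow> j < n \<Longrightarrow> F i j differentiable (at x)" "a < n" "b < n"
    and "Determinant.det (matf n (\<lambda>i j. F i j x)) \<noteq> 0"
  shows "(\<lambda>y. invm n (\<lambda>i j. F i j y) a b) differentiable (at x)"
  unfolding invm_def
  by (intro differentiable_divide cofactor_differentiable det_differentiable assms) (use assms in auto)

lemma invm_deriv:
  assumes der: "\<And>i j. i < n \<Longrightarrow> j < n \<Longrightarrow> ((\<lambda>s. F i j s) has_real_derivative F' i j) (at t)"
    and nz: "Determinant.det (matf n (\<lambda>i j. F i j t)) \<noteq> 0" and ij: "i < n" "j < n"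
  shows "((\<lambda>s. invm n (\<lambda>i j. F i j s) i j) has_real_derivative
     (- (\<Sum>a<n. \<Sum>k<n. invm n (\<lambda>i j. F i j t) i a * F' a k * invm n (\<lambda>i j. F i j t) k j))) (at t)"
proof -
  define I where "I = (\<lambda>s a b. invm n (\<lambda>i j. F i j s) a b)"
  have diffF: "F a b differentiable (at t)" if "a < n" "b < n" for a b
    using der[OF that] real_differentiable_def by blast
  have "\<forall>a b. \<exists>D. a < n \<longrightarrow> b < n \<longrightarrow> ((\<lambda>s. I s a b) has_real_derivative D) (at t)"
  proof (intro allI impI)
    fix a b
    have "a < n \<Longrightarrow> b < n \<Longrightarrow> (\<lambda>s. I s a b) differentiable (at t)"
      unfolding I_def by (rule invm_differentiable[OF diffF _ _ nz])
    then show "\<exists>D. a < n \<longrightarrow> b < n \<longrightarrow> ((\<lambda>s. I s a b) has_real_derivative D) (at t)"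
      using real_differentiable_def by blast
  qed
  then obtain X where X: "\<And>a b. a < n \<Longrightarrow> b < n \<Longrightarrow> ((\<lambda>s. I s a b) has_real_derivative X a b) (at t)"
    by metis
  have "isCont (\<lambda>s. Determinant.det (matf n (\<lambda>i j. F i j s))) t"
    by (rule DERIV_isCont[OF det_deriv[OF der]])
  then have ev: "eventually (\<lambda>s. Determinant.det (matf n (\<lambda>i j. F i j s)) \<noteq> 0) (nhds t)"
    using nz by (simp add: isCont_def tendsto_imp_eventually_ne eventually_nhds_conv_at)
  have key: "(\<Sum>k<n. F' a k * I t k b + F a k t * X k b) = 0" if ab: "a < n" "b < n" for a b
  proof -
    have d1: "((\<lambda>s. \<Sum>k<n. F a k s * I s k b) has_real_derivative (\<Sum>k<n. F' a k * I t k b + F a k t * X k b)) (at t)"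
    proof (intro DERIV_sum)
      fix k assume k: "k \<in> {..<n}"
      show "((\<lambda>s. F a k s * I s k b) has_real_derivative F' a k * I t k b + F a k t * X k b) (at t)"
        using DERIV_mult[OF der X, of a k k b] k ab by (simp add: mult.commute)
    qed
    have "eventually (\<lambda>s. (\<Sum>k<n. F a k s * I s k b) = (if a = b then 1 else 0)) (nhds t)"
      using ev
    proof eventually_elim
      case (elim s)
      show ?case using invm_right[where A="\<lambda>i j. F i j s" and i=a and j=b] elim ab by (simp add: I_def)
    qed
    then have "((\<lambda>s. \<Sum>k<n. F a k s * I s k b) has_real_derivative 0) (at t)"
      by (subst DERIV_cong_ev[OF refl _ refl]) (auto intro: DERIV_const)
    then show ?thesis using d1 DERIV_unique by blast
  qed
  have "X i j = (\<Sum>k<n. (if i = k then 1 else 0) * X k j)"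
    using ij by (simp add: sum_delta_left)
  also have "\<dots> = (\<Sum>k<n. (\<Sum>a<n. I t i a * F a k t) * X k j)"
  proof (rule sum.cong[OF refl])
    fix k assume k: "k \<in> {..<n}"
    show "(if i = k then 1 else 0) * X k j = (\<Sum>a<n. I t i a * F a k t) * X k j"
      using invm_left[where A="\<lambda>i j. F i j t" and i=i and j=k] k ij nz by (simp add: I_def)
  qed
  also have "\<dots> = (\<Sum>a<n. I t i a * (\<Sum>k<n. F a k t * X k j))"
    by (simp add: sum_distrib_left sum_distrib_right mult.assoc) (rule sum.swap)
  also have "\<dots> = (\<Sum>a<n. I t i a * (- (\<Sum>k<n. F' a k * I t k j)))"
  proof (rule sum.cong[OF refl])
    fix a assume a: "a \<in> {..<n}"
    have "(\<Sum>k<n. F a k t * X k j) = - (\<Sum>k<n. F' a k * I t k j)"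
      using key[of a j] a ij by (simp add: sum.distrib eq_neg_iff_add_eq_0 add.commute)
    then show "I t i a * (\<Sum>k<n. F a k t * X k j) = I t i a * (- (\<Sum>k<n. F' a k * I t k j))" by simp
  qed
  also have "\<dots> = - (\<Sum>a<n. \<Sum>k<n. I t i a * F' a k * I t k j)"
    by (simp add: sum_distrib_left sum_negf mult.assoc)
  finally show ?thesis using X[OF ij] by (simp add: I_def)
qed



definition wm :: "nat \<Rightarrow> (nat \<Rightarrow> nat \<Rightarrow> real \<times> real \<Rightarrow> real) \<Rightarrow> (real \<times> real \<Rightarrow> real) \<Rightarrow> nat \<Rightarrow> nat \<Rightarrow> real \<times> real \<Rightarrow> real" where
  "wm n G C a b = (if a < n \<and> b < n then G a b else if a = b \<and> (a = n \<or> a = Suc n) then C else (\<lambda>_. 0))"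

lemma warped_eq: "warped_metric n G C a b p = wm n G C a b (p n, p (Suc n))"
  by (auto simp: warped_metric_def wm_def)

definition dd :: "nat \<Rightarrow> nat \<Rightarrow> (real \<times> real \<Rightarrow> real) \<Rightarrow> real \<times> real \<Rightarrow> real" where
  "dd n a H w = (if a = n then pu H w else if a = Suc n then pv H w else 0)"

lemma pd_proj:
  assumes "\<And>p. F p = H (p n, p (Suc n))"
  shows "pd a F p = dd n a H (p n, p (Suc n))"
proof -
  consider "a = n" | "a = Suc n" | "a \<noteq> n" "a \<noteq> Suc n" by blast
  then show ?thesis
  proof cases
    case 1
    then show ?thesis by (simp add: pd_def assms dd_def pu_def)
  next
    case 2
    then show ?thesis by (simp add: pd_def assms dd_def pv_def)
  next
    case 3
    then have "(\<lambda>t. F (p(a := t))) = (\<lambda>t. H (p n, p (Suc n)))"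
      by (simp add: assms)
    then show ?thesis using 3 by (simp add: pd_def dd_def)
  qed
qed

lemma pd_warped: "pd a (warped_metric n G C d c) p = dd n a (wm n G C d c) (p n, p (Suc n))"
  by (rule pd_proj) (rule warped_eq)

definition IM :: "nat \<Rightarrow> (nat \<Rightarrow> nat \<Rightarrow> real \<times> real \<Rightarrow> real) \<Rightarrow> (real \<times> real \<Rightarrow> real) \<Rightarrow> real \<times> real \<Rightarrow> nat \<Rightarrow> nat \<Rightarrow> real" where
  "IM n G C w = (SOME h. \<forall>i<n+2. \<forall>j<n+2. (\<Sum>c<n+2. wm n G C i c w * h c j) = (if i = j then 1 else 0))"

lemma inv_metric_eq: "inv_metric (n+2) (warped_metric n G C) a b p = IM n G C (p n, p (Suc n)) a b"
  by (simp add: inv_metric_def IM_def warped_eq)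

definition Chr :: "nat \<Rightarrow> (nat \<Rightarrow> nat \<Rightarrow> real \<times> real \<Rightarrow> real) \<Rightarrow> (real \<times> real \<Rightarrow> real) \<Rightarrow> nat \<Rightarrow> nat \<Rightarrow> nat \<Rightarrow> real \<times> real \<Rightarrow> real" where
  "Chr n G C a b c w = (1/2) * (\<Sum>d<n+2. IM n G C w a d *
        (dd n b (wm n G C d c) w + dd n c (wm n G C d b) w - dd n d (wm n G C b c) w))"

lemma christoffel_eq: "christoffel (n+2) (warped_metric n G C) a b c p = Chr n G C a b c (p n, p (Suc n))"
  unfolding christoffel_def Chr_def inv_metric_eq pd_warped by (rule refl)

lemma pd_chr: "pd x (christoffel (n+2) (warped_metric n G C) a b c) p = dd n x (Chr n G C a b c) (p n, p (Suc n))"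
  by (rule pd_proj) (rule christoffel_eq)

definition Ric :: "nat \<Rightarrow> (nat \<Rightarrow> nat \<Rightarrow> real \<times> real \<Rightarrow> real) \<Rightarrow> (real \<times> real \<Rightarrow> real) \<Rightarrow> nat \<Rightarrow> nat \<Rightarrow> real \<times> real \<Rightarrow> real" where
  "Ric n G C b d w =
     (\<Sum>a<n+2. dd n a (Chr n G C a b d) w)
     - (\<Sum>a<n+2. dd n d (Chr n G C a b a) w)
     + (\<Sum>a<n+2. \<Sum>e<n+2. Chr n G C a a e w * Chr n G C e b d w)
     - (\<Sum>a<n+2. \<Sum>e<n+2. Chr n G C a d e w * Chr n G C e b a w)"

lemma ricci_eq: "ricci (n+2) (warped_metric n G C) b d p = Ric n G C b d (p n, p (Suc n))"
  unfolding ricci_def Ric_def christoffel_eq pd_chr by (rule refl)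



lemma sum_split2: "(\<Sum>c<n+2. f c) = (\<Sum>c<n. f c) + f n + (f (Suc n) :: real)"
  by (simp add: add.assoc)

lemma wm_app: "wm n G C d c w = (if d < n \<and> c < n then G d c w else if d = c \<and> (d = n \<or> d = Suc n) then C w else 0)"
  by (auto simp: wm_def)

lemma dd_wm: "dd n x (wm n G C d c) w = (if d < n \<and> c < n then dd n x (G d c) w else if d = c \<and> (d = n \<or> d = Suc n) then dd n x C w else 0)"
  by (auto simp: wm_def dd_def pu_def pv_def)

lemma dd_low: "x < n \<Longrightarrow> dd n x H w = 0"
  by (simp add: dd_def)

locale wsetup =
  fixes n :: nat and G :: "nat \<Rightarrow> nat \<Rightarrow> real \<times> real \<Rightarrow> real" and C :: "real \<times> real \<Rightarrow> real"
    and \<Omega> :: "(real \<times> real) set"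
  assumes opn: "open \<Omega>"
    and Gnz: "\<And>w. w \<in> \<Omega> \<Longrightarrow> Determinant.det (matf n (\<lambda>i j. G i j w)) \<noteq> 0"
    and Cnz: "\<And>w. w \<in> \<Omega> \<Longrightarrow> C w \<noteq> 0"
    and Gsym: "\<And>i j w. i < n \<Longrightarrow> j < n \<Longrightarrow> w \<in> \<Omega> \<Longrightarrow> G i j w = G j i w"
begin

definition Gi :: "real \<times> real \<Rightarrow> nat \<Rightarrow> nat \<Rightarrow> real" where
  "Gi w i j = invm n (\<lambda>i j. G i j w) i j"

lemma Gi_right: "w \<in> \<Omega> \<Longrightarrow> i < n \<Longrightarrow> j < n \<Longrightarrow> (\<Sum>k<n. G i k w * Gi w k j) = (if i = j then 1 else 0)"
  unfolding Gi_def by (rule invm_right[where A="\<lambda>i j. G i j w"]) (simp_all add: Gnz)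

lemma Gi_left: "w \<in> \<Omega> \<Longrightarrow> i < n \<Longrightarrow> j < n \<Longrightarrow> (\<Sum>k<n. Gi w i k * G k j w) = (if i = j then 1 else 0)"
  unfolding Gi_def by (rule invm_left[where A="\<lambda>i j. G i j w"]) (simp_all add: Gnz)

definition K :: "real \<times> real \<Rightarrow> nat \<Rightarrow> nat \<Rightarrow> real" where
  "K w a b = (if a < n \<and> b < n then Gi w a b else if a = b \<and> (a = n \<or> a = Suc n) then 1 / C w else 0)"

lemma K_right:
  assumes w: "w \<in> \<Omega>" and ij: "i < n+2" "j < n+2"
  shows "(\<Sum>c<n+2. wm n G C i c w * K w c j) = (if i = j then 1 else 0)"
proof -
  have "(\<Sum>c<n+2. wm n G C i c w * K w c j) = (\<Sum>c<n. wm n G C i c w * K w c j) + wm n G C i n w * K w n j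
      + wm n G C i (Suc n) w * K w (Suc n) j" by (rule sum_split2)
  also have "\<dots> = (if i = j then 1 else 0)"
  proof -
    have "i < n \<or> i = n \<or> i = Suc n" "j < n \<or> j = n \<or> j = Suc n" using ij by linarith+
    then show ?thesis
      using Gi_right[OF w] Cnz[OF w] by (elim disjE) (auto simp: wm_app K_def)
  qed
  finally show ?thesis .
qed

lemma K_left:
  assumes w: "w \<in> \<Omega>" and ij: "i < n+2" "j < n+2"
  shows "(\<Sum>c<n+2. K w i c * wm n G C c j w) = (if i = j then 1 else 0)"
proof -
  have "(\<Sum>c<n+2. K w i c * wm n G C c j w) = (\<Sum>c<n. K w i c * wm n G C c j w) + K w i n * wm n G C n j w
      + K w i (Suc n) * wm n G C (Suc n) j w" by (rule sum_split2)
  also have "\<dots> = (if i = j then 1 else 0)"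
  proof -
    have "i < n \<or> i = n \<or> i = Suc n" "j < n \<or> j = n \<or> j = Suc n" using ij by linarith+
    then show ?thesis
      using Gi_left[OF w] Cnz[OF w] by (elim disjE) (auto simp: wm_app K_def)
  qed
  finally show ?thesis .
qed

lemma IM_eq:
  assumes w: "w \<in> \<Omega>" and ab: "a < n+2" "b < n+2"
  shows "IM n G C w a b = K w a b"
proof -
  define h where "h = IM n G C w"
  have Ph: "\<forall>i<n+2. \<forall>j<n+2. (\<Sum>c<n+2. wm n G C i c w * h c j) = (if i = j then 1 else 0)"
    unfolding h_def IM_def by (rule someI[where x="K w"]) (use K_right[OF w] in blast)
  have "K w a b = (\<Sum>i<n+2. K w a i * (if i = b then 1 else 0))"
    using ab by (simp add: sum_delta_right)
  also have "\<dots> = (\<Sum>i<n+2. K w a i * (\<Sum>c<n+2. wm n G C i c w * h c b))"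
    using Ph ab by simp
  also have "\<dots> = (\<Sum>c<n+2. (\<Sum>i<n+2. K w a i * wm n G C i c w) * h c b)"
    by (simp only: sum_distrib_left sum_distrib_right mult.assoc) (rule sum.swap)
  also have "\<dots> = (\<Sum>c<n+2. (if a = c then 1 else 0) * h c b)"
    using K_left[OF w] ab by simp
  also have "\<dots> = h a b"
    using ab by (simp add: sum_delta_left)
  finally show ?thesis by (simp add: h_def)
qed

end


context wsetup begin

lemma Chr_K:
  assumes w: "w \<in> \<Omega>" and a: "a < n+2"
  shows "Chr n G C a b c w = (1/2) * (\<Sum>d<n+2. K w a d *
        (dd n b (wm n G C d c) w + dd n c (wm n G C d b) w - dd n d (wm n G C b c) w))"
  unfolding Chr_def using IM_eq[OF w a] by simp

lemma Chr_split:
  assumes w: "w \<in> \<Omega>" and a: "a < n+2"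
  shows "Chr n G C a b c w = (1/2) * ((\<Sum>d<n. K w a d *
        (dd n b (wm n G C d c) w + dd n c (wm n G C d b) w - dd n d (wm n G C b c) w))
     + K w a n * (dd n b (wm n G C n c) w + dd n c (wm n G C n b) w - dd n n (wm n G C b c) w)
     + K w a (Suc n) * (dd n b (wm n G C (Suc n) c) w + dd n c (wm n G C (Suc n) b) w - dd n (Suc n) (wm n G C b c) w))"
  unfolding Chr_K[OF w a] by (rule arg_cong[where f="\<lambda>x. (1/2) * x"], rule sum_split2)

lemma c1:
  assumes w: "w \<in> \<Omega>" and al: "al = n \<or> al = Suc n" and ij: "i < n" "j < n"
  shows "Chr n G C al i j w = -(1/2) * dd n al (G i j) w / C w"
proof -
  have a: "al < n+2" using al by auto
  show ?thesis unfolding Chr_split[OF w a] using al ij Cnz[OF w]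
    by (auto simp: K_def dd_wm dd_low)
qed

lemma c2:
  assumes w: "w \<in> \<Omega>" and ijk: "i < n" "j < n" "k < n"
  shows "Chr n G C k i j w = 0"
proof -
  have a: "k < n+2" using ijk by auto
  show ?thesis unfolding Chr_split[OF w a] using ijk
    by (auto simp: K_def dd_wm dd_low)
qed

lemma c3:
  assumes w: "w \<in> \<Omega>" and be: "be = n \<or> be = Suc n" and jk: "j < n" "k < n"
  shows "Chr n G C k j be w = (1/2) * (\<Sum>d<n. Gi w k d * dd n be (G d j) w)"
proof -
  have a: "k < n+2" using jk by auto
  show ?thesis unfolding Chr_split[OF w a] using be jk
    by (auto simp: K_def dd_wm dd_low intro!: sum.cong)
qed

lemma c3':
  assumes w: "w \<in> \<Omega>" and be: "be = n \<or> be = Suc n" and jk: "j < n" "k < n"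
  shows "Chr n G C k be j w = (1/2) * (\<Sum>d<n. Gi w k d * dd n be (G d j) w)"
proof -
  have a: "k < n+2" using jk by auto
  show ?thesis unfolding Chr_split[OF w a] using be jk
    by (auto simp: K_def dd_wm dd_low intro!: sum.cong)
qed

lemma c4:
  assumes w: "w \<in> \<Omega>" and al: "al = n \<or> al = Suc n" and be: "be = n \<or> be = Suc n" and j: "j < n"
  shows "Chr n G C al j be w = 0"
proof -
  have a: "al < n+2" using al by auto
  show ?thesis unfolding Chr_split[OF w a] using al be j
    by (auto simp: K_def dd_wm dd_low)
qed

lemma c4':
  assumes w: "w \<in> \<Omega>" and al: "al = n \<or> al = Suc n" and be: "be = n \<or> be = Suc n" and j: "j < n"
  shows "Chr n G C al be j w = 0"
proof -
  have a: "al < n+2" using al by auto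
  show ?thesis unfolding Chr_split[OF w a] using al be j
    by (auto simp: K_def dd_wm dd_low)
qed

lemma c6:
  assumes w: "w \<in> \<Omega>" and al: "al = n \<or> al = Suc n" and be: "be = n \<or> be = Suc n"
  shows "Chr n G C al al be w = (1/2) * dd n be C w / C w"
proof -
  have a: "al < n+2" using al by auto
  show ?thesis unfolding Chr_split[OF w a] using al be Cnz[OF w]
    by (auto simp: K_def dd_wm dd_low)
qed

end


context wsetup begin

definition RB :: "nat \<Rightarrow> nat \<Rightarrow> nat \<Rightarrow> real \<times> real \<Rightarrow> real" where
  "RB be i j w = dd n be (Chr n G C be i j) w + (\<Sum>a<n+2. Chr n G C a a be w) * Chr n G C be i j w
     - (\<Sum>k<n. Chr n G C k j be w * Chr n G C be i k w + Chr n G C be j k w * Chr n G C k i be w)"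

lemma Ric_split:
  assumes w: "w \<in> \<Omega>" and ij: "i < n" "j < n"
  shows "Ric n G C i j w = RB n i j w + RB (Suc n) i j w"
proof -
  let ?X = "Chr n G C"
  have P1: "(\<Sum>a<n+2. dd n a (?X a i j) w) = dd n n (?X n i j) w + dd n (Suc n) (?X (Suc n) i j) w"
    unfolding sum_split2 by (simp add: dd_low)
  have P2: "(\<Sum>a<n+2. dd n j (?X a i a) w) = 0"
    using ij by (simp add: dd_low)
  have P3: "(\<Sum>a<n+2. \<Sum>e<n+2. ?X a a e w * ?X e i j w)
      = (\<Sum>a<n+2. ?X a a n w) * ?X n i j w + (\<Sum>a<n+2. ?X a a (Suc n) w) * ?X (Suc n) i j w"
  proof -
    have "(\<Sum>a<n+2. \<Sum>e<n+2. ?X a a e w * ?X e i j w) = (\<Sum>e<n+2. (\<Sum>a<n+2. ?X a a e w) * ?X e i j w)"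
      by (simp only: sum_distrib_right) (rule sum.swap)
    also have "\<dots> = (\<Sum>e<n. (\<Sum>a<n+2. ?X a a e w) * ?X e i j w)
        + (\<Sum>a<n+2. ?X a a n w) * ?X n i j w + (\<Sum>a<n+2. ?X a a (Suc n) w) * ?X (Suc n) i j w"
      by (rule sum_split2)
    also have "(\<Sum>e<n. (\<Sum>a<n+2. ?X a a e w) * ?X e i j w) = 0"
      using c2[OF w ij] by simp
    finally show ?thesis by simp
  qed
  have P4: "(\<Sum>a<n+2. \<Sum>e<n+2. ?X a j e w * ?X e i a w)
      = (\<Sum>k<n. ?X k j n w * ?X n i k w + ?X n j k w * ?X k i n w)
      + (\<Sum>k<n. ?X k j (Suc n) w * ?X (Suc n) i k w + ?X (Suc n) j k w * ?X k i (Suc n) w)"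
  proof -
    have A: "(\<Sum>e<n+2. ?X a j e w * ?X e i a w) = ?X a j n w * ?X n i a w + ?X a j (Suc n) w * ?X (Suc n) i a w"
      if a: "a < n" for a
      unfolding sum_split2 using c2[OF w ij(1) a] by simp
    have B: "(\<Sum>e<n+2. ?X al j e w * ?X e i al w) = (\<Sum>e<n. ?X al j e w * ?X e i al w)"
      if al: "al = n \<or> al = Suc n" for al
      unfolding sum_split2 using c4[OF w al _ ij(2)] by simp
    have "(\<Sum>a<n+2. \<Sum>e<n+2. ?X a j e w * ?X e i a w)
        = (\<Sum>a<n. \<Sum>e<n+2. ?X a j e w * ?X e i a w) + (\<Sum>e<n+2. ?X n j e w * ?X e i n w)
          + (\<Sum>e<n+2. ?X (Suc n) j e w * ?X e i (Suc n) w)"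
      by (rule sum_split2)
    also have "\<dots> = (\<Sum>a<n. ?X a j n w * ?X n i a w + ?X a j (Suc n) w * ?X (Suc n) i a w)
          + (\<Sum>e<n. ?X n j e w * ?X e i n w) + (\<Sum>e<n. ?X (Suc n) j e w * ?X e i (Suc n) w)"
      using A B[of n] B[of "Suc n"] by simp
    finally show ?thesis by (simp add: sum.distrib)
  qed
  show ?thesis
    unfolding Ric_def RB_def P1 P2 P3 P4 by simp
qed

end


lemma trace_swap:
  fixes Gi M :: "nat \<Rightarrow> nat \<Rightarrow> real"
  assumes sym: "\<And>i j. i < n \<Longrightarrow> j < n \<Longrightarrow> Gi i j = Gi j i"
  shows "(\<Sum>i<n. \<Sum>j<n. Gi i j * M i j) = (\<Sum>k<n. \<Sum>d<n. Gi k d * M d k)"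
proof -
  have "(\<Sum>i<n. \<Sum>j<n. Gi i j * M i j) = (\<Sum>i<n. \<Sum>j<n. Gi j i * M i j)"
    by (intro sum.cong refl) (simp add: sym)
  also have "\<dots> = (\<Sum>k<n. \<Sum>d<n. Gi k d * M d k)"
    by (rule sum.swap)
  finally show ?thesis .
qed

lemma trace_alg:
  fixes Gi M N :: "nat \<Rightarrow> nat \<Rightarrow> real"
  assumes sym: "\<And>i j. i < n \<Longrightarrow> j < n \<Longrightarrow> Gi i j = Gi j i"
  defines "A \<equiv> (\<lambda>k j. \<Sum>d<n. Gi k d * M d j)"
  defines "T \<equiv> (\<Sum>k<n. A k k)"
  defines "S \<equiv> (\<Sum>j<n. \<Sum>k<n. A j k * A k j)"
  shows "(\<Sum>i<n. \<Sum>j<n. Gi i j * (2 * N i j + T * M i j - (\<Sum>k<n. A k j * M i k + M j k * A k i)))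
    = 2 * (\<Sum>k<n. \<Sum>d<n. Gi k d * N d k) + T * T - 2 * S"
proof -
  have e1: "(\<Sum>i<n. \<Sum>j<n. Gi i j * N i j) = (\<Sum>k<n. \<Sum>d<n. Gi k d * N d k)"
    by (rule trace_swap[OF sym])
  have e2: "(\<Sum>i<n. \<Sum>j<n. Gi i j * M i j) = T"
    unfolding T_def A_def by (rule trace_swap[OF sym])
  have e3: "(\<Sum>i<n. \<Sum>j<n. Gi i j * (\<Sum>k<n. A k j * M i k)) = S"
  proof -
    have "(\<Sum>i<n. \<Sum>j<n. Gi i j * (\<Sum>k<n. A k j * M i k)) = (\<Sum>j<n. \<Sum>k<n. A k j * (\<Sum>i<n. Gi j i * M i k))"
    proof -
      have "(\<Sum>i<n. \<Sum>j<n. Gi i j * (\<Sum>k<n. A k j * M i k)) = (\<Sum>i<n. \<Sum>j<n. \<Sum>k<n. Gi i j * A k j * M i k)"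
        by (simp add: sum_distrib_left mult.assoc)
      also have "\<dots> = (\<Sum>j<n. \<Sum>i<n. \<Sum>k<n. Gi i j * A k j * M i k)"
        by (rule sum.swap)
      also have "\<dots> = (\<Sum>j<n. \<Sum>k<n. \<Sum>i<n. Gi i j * A k j * M i k)"
        by (rule sum.cong[OF refl], rule sum.swap)
      also have "\<dots> = (\<Sum>j<n. \<Sum>k<n. A k j * (\<Sum>i<n. Gi j i * M i k))"
        by (intro sum.cong refl) (simp add: sum_distrib_left sym mult_ac)
      finally show ?thesis .
    qed
    also have "\<dots> = S"
      unfolding S_def A_def by (simp add: mult.commute)
    finally show ?thesis .
  qed
  have e4: "(\<Sum>i<n. \<Sum>j<n. Gi i j * (\<Sum>k<n. M j k * A k i)) = S"
  proof -
    have "(\<Sum>i<n. \<Sum>j<n. Gi i j * (\<Sum>k<n. M j k * A k i)) = (\<Sum>i<n. \<Sum>j<n. \<Sum>k<n. Gi i j * M j k * A k i)"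
      by (simp add: sum_distrib_left mult.assoc)
    also have "\<dots> = (\<Sum>i<n. \<Sum>k<n. \<Sum>j<n. Gi i j * M j k * A k i)"
      by (rule sum.cong[OF refl], rule sum.swap)
    also have "\<dots> = (\<Sum>i<n. \<Sum>k<n. A i k * A k i)"
      unfolding A_def by (intro sum.cong refl) (simp add: sum_distrib_right)
    finally show ?thesis unfolding S_def .
  qed
  have "(\<Sum>i<n. \<Sum>j<n. Gi i j * (2 * N i j + T * M i j - (\<Sum>k<n. A k j * M i k + M j k * A k i)))
      = 2 * (\<Sum>i<n. \<Sum>j<n. Gi i j * N i j) + T * (\<Sum>i<n. \<Sum>j<n. Gi i j * M i j)
        - (\<Sum>i<n. \<Sum>j<n. Gi i j * (\<Sum>k<n. A k j * M i k)) - (\<Sum>i<n. \<Sum>j<n. Gi i j * (\<Sum>k<n. M j k * A k i))"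
    by (simp add: algebra_simps sum.distrib sum_subtractf sum_distrib_left)
  then show ?thesis using e1 e2 e3 e4 by simp
qed

context wsetup begin

lemma Gi_sym:
  assumes w: "w \<in> \<Omega>" and ij: "i < n" "j < n"
  shows "Gi w i j = Gi w j i"
proof -
  have L: "(\<Sum>k<n. Gi w k a * G k c w) = (if a = c then 1 else 0)" if "a < n" "c < n" for a c
  proof -
    have "(\<Sum>k<n. Gi w k a * G k c w) = (\<Sum>k<n. G c k w * Gi w k a)"
      by (intro sum.cong refl) (simp add: Gsym[OF that(2) _ w] mult.commute)
    also have "\<dots> = (if c = a then 1 else 0)" using Gi_right[OF w that(2,1)] .
    finally show ?thesis by auto
  qed
  have "Gi w j i = (\<Sum>k<n. Gi w k i * (if k = j then 1 else 0))"
    using ij by (simp add: sum_delta_right)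
  also have "\<dots> = (\<Sum>k<n. Gi w k i * (\<Sum>l<n. G k l w * Gi w l j))"
    by (intro sum.cong refl) (simp add: Gi_right[OF w _ ij(2)])
  also have "\<dots> = (\<Sum>l<n. (\<Sum>k<n. Gi w k i * G k l w) * Gi w l j)"
    by (simp only: sum_distrib_left sum_distrib_right mult.assoc) (rule sum.swap)
  also have "\<dots> = (\<Sum>l<n. (if i = l then 1 else 0) * Gi w l j)"
    by (intro sum.cong refl) (simp add: L ij)
  also have "\<dots> = Gi w i j" using ij by (simp add: sum_delta_left)
  finally show ?thesis by simp
qed

end


lemma ev_line:
  assumes "open S" "line b w s0 \<in> S"
  shows "eventually (\<lambda>s. line b w s \<in> S) (nhds s0)"
proof -
  have "isCont (line b w) s0"
    using line_differentiable differentiable_imp_continuous_within by blast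
  then have "eventually (\<lambda>s. line b w s \<in> S) (at s0)"
    using assms unfolding isCont_def by (rule topological_tendstoD)
  then show ?thesis using assms(2) by (simp add: eventually_nhds_conv_at)
qed

definition idx :: "nat \<Rightarrow> bool \<Rightarrow> nat" where "idx n b = (if b then n else Suc n)"

lemma idx_cases: "idx n b = n \<or> idx n b = Suc n" by (simp add: idx_def)
lemma idx_lt: "idx n b < n + 2" by (simp add: idx_def)
lemma dd_idx: "dd n (idx n b) H w = pdir b H w" by (simp add: idx_def dd_def pdir_def)

locale wsmooth = wsetup +
  assumes Gd: "\<And>i j w. i < n \<Longrightarrow> j < n \<Longrightarrow> w \<in> \<Omega> \<Longrightarrow> G i j differentiable (at w)"
    and Gdd: "\<And>i j b w. i < n \<Longrightarrow> j < n \<Longrightarrow> w \<in> \<Omega> \<Longrightarrow> pdir b (G i j) differentiable (at w)"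
    and Cd: "\<And>w. w \<in> \<Omega> \<Longrightarrow> C differentiable (at w)"
    and Ric0: "\<And>i j w. w \<in> \<Omega> \<Longrightarrow> i < n \<Longrightarrow> j < n \<Longrightarrow> Ric n G C i j w = 0"
begin

lemma line_in: "w \<in> \<Omega> \<Longrightarrow> eventually (\<lambda>s. line b w s \<in> \<Omega>) (nhds (pos b w))"
  by (rule ev_line[OF opn]) simp

lemma deriv_Chr:
  assumes w: "w \<in> \<Omega>" and ij: "i < n" "j < n"
  shows "dd n (idx n b) (Chr n G C (idx n b) i j) w =
    -(1/2) * (pdir b (pdir b (G i j)) w * C w - pdir b (G i j) w * pdir b C w) / (C w)^2"
proof -
  let ?g = "\<lambda>s. -(1/2) * pdir b (G i j) (line b w s) / C (line b w s)"
  have d1: "((\<lambda>s. pdir b (G i j) (line b w s)) has_real_derivative pdir b (pdir b (G i j)) w) (at (pos b w))"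
    using dir_deriv[of "pdir b (G i j)" b w "pos b w"] Gdd[OF ij w] by simp
  have d2: "((\<lambda>s. C (line b w s)) has_real_derivative pdir b C w) (at (pos b w))"
    using dir_deriv[of C b w "pos b w"] Cd[OF w] by simp
  have "(?g has_real_derivative -(1/2) * (pdir b (pdir b (G i j)) w * C w - pdir b (G i j) w * pdir b C w) / (C w)^2) (at (pos b w))"
    using DERIV_cmult[OF DERIV_divide[OF d1 d2], of "-(1/2)"] Cnz[OF w]
    by (simp add: power2_eq_square)
  moreover have "eventually (\<lambda>s. Chr n G C (idx n b) i j (line b w s) = ?g s) (nhds (pos b w))"
    using line_in[OF w] by eventually_elim (simp add: c1[OF _ idx_cases ij] dd_idx)
  ultimately have "((\<lambda>s. Chr n G C (idx n b) i j (line b w s)) has_real_derivative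
      -(1/2) * (pdir b (pdir b (G i j)) w * C w - pdir b (G i j) w * pdir b C w) / (C w)^2) (at (pos b w))"
    by (subst DERIV_cong_ev[OF refl _ refl]) auto
  then show ?thesis
    by (simp add: dd_idx pdir_deriv DERIV_imp_deriv)
qed

definition Mb where "Mb b w i j = pdir b (G i j) w"
definition Nb where "Nb b w i j = pdir b (pdir b (G i j)) w"
definition Ab where "Ab b w k j = (\<Sum>d<n. Gi w k d * Mb b w d j)"
definition Tb where "Tb b w = (\<Sum>k<n. Ab b w k k)"
definition Sb where "Sb b w = (\<Sum>j<n. \<Sum>k<n. Ab b w j k * Ab b w k j)"
definition trN where "trN b w = (\<Sum>k<n. \<Sum>d<n. Gi w k d * Nb b w d k)"

lemma sum_diag:
  assumes w: "w \<in> \<Omega>"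
  shows "(\<Sum>a<n+2. Chr n G C a a (idx n b) w) = Tb b w / 2 + pdir b C w / C w"
proof -
  have "(\<Sum>a<n+2. Chr n G C a a (idx n b) w) = (\<Sum>a<n. Chr n G C a a (idx n b) w)
     + Chr n G C n n (idx n b) w + Chr n G C (Suc n) (Suc n) (idx n b) w"
    by (rule sum_split2)
  moreover have "(\<Sum>a<n. Chr n G C a a (idx n b) w) = (\<Sum>a<n. (1/2) * Ab b w a a)"
    by (intro sum.cong refl) (simp add: c3[OF w idx_cases] Ab_def Mb_def dd_idx)
  moreover have "Chr n G C n n (idx n b) w = (1/2) * pdir b C w / C w"
    by (simp add: c6[OF w _ idx_cases] dd_idx)
  moreover have "Chr n G C (Suc n) (Suc n) (idx n b) w = (1/2) * pdir b C w / C w"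
    by (simp add: c6[OF w _ idx_cases] dd_idx)
  moreover have "(\<Sum>a<n. (1/2) * Ab b w a a) = Tb b w / 2"
    by (simp add: Tb_def sum_divide_distrib[symmetric])
  ultimately show ?thesis by simp
qed

lemma RB_explicit:
  assumes w: "w \<in> \<Omega>" and ij: "i < n" "j < n"
  shows "RB (idx n b) i j w = -(1 / (4 * C w)) * (2 * Nb b w i j + Tb b w * Mb b w i j
          - (\<Sum>k<n. Ab b w k j * Mb b w i k + Mb b w j k * Ab b w k i))"
proof -
  define c where "c = C w"
  define c' where "c' = pdir b C w"
  have cnz: "c \<noteq> 0" using Cnz[OF w] by (simp add: c_def)
  have ch1: "Chr n G C (idx n b) x y w = -(1/2) * Mb b w x y / c" if "x < n" "y < n" for x y
    using c1[OF w idx_cases that] by (simp add: Mb_def dd_idx c_def)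
  have ch3: "Chr n G C k x (idx n b) w = (1/2) * Ab b w k x" if "x < n" "k < n" for x k
    using c3[OF w idx_cases that] by (simp add: Ab_def Mb_def dd_idx)
  have sk: "(\<Sum>k<n. Chr n G C k j (idx n b) w * Chr n G C (idx n b) i k w + Chr n G C (idx n b) j k w * Chr n G C k i (idx n b) w)
      = -(1/(4*c)) * (\<Sum>k<n. Ab b w k j * Mb b w i k + Mb b w j k * Ab b w k i)"
    unfolding sum_distrib_left
    by (intro sum.cong refl) (simp add: ch1 ch3 ij cnz field_simps)
  have "RB (idx n b) i j w = -(1/2) * (Nb b w i j * c - Mb b w i j * c') / c^2
      + (Tb b w / 2 + c' / c) * (-(1/2) * Mb b w i j / c)
      - (-(1/(4*c)) * (\<Sum>k<n. Ab b w k j * Mb b w i k + Mb b w j k * Ab b w k i))"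
    unfolding RB_def deriv_Chr[OF w ij] sum_diag[OF w] sk
    by (simp add: ch1 ij Nb_def Mb_def c_def c'_def)
  also have "\<dots> = -(1 / (4 * c)) * (2 * Nb b w i j + Tb b w * Mb b w i j
          - (\<Sum>k<n. Ab b w k j * Mb b w i k + Mb b w j k * Ab b w k i))"
    using cnz by (simp add: field_simps power2_eq_square)
  finally show ?thesis by (simp add: c_def)
qed

lemma trace_identity:
  assumes w: "w \<in> \<Omega>"
  shows "(trN True w - Sb True w + Tb True w ^ 2 / 2) + (trN False w - Sb False w + Tb False w ^ 2 / 2) = 0"
proof -
  have tb: "(\<Sum>i<n. \<Sum>j<n. Gi w i j * RB (idx n b) i j w) = -(1 / (4 * C w)) * (2 * trN b w + Tb b w * Tb b w - 2 * Sb b w)" for b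
  proof -
    have "(\<Sum>i<n. \<Sum>j<n. Gi w i j * RB (idx n b) i j w) = -(1 / (4 * C w)) * (\<Sum>i<n. \<Sum>j<n. Gi w i j * (2 * Nb b w i j + Tb b w * Mb b w i j
          - (\<Sum>k<n. Ab b w k j * Mb b w i k + Mb b w j k * Ab b w k i)))"
      unfolding sum_distrib_left by (intro sum.cong refl) (simp add: RB_explicit[OF w] mult_ac)
    also have "\<dots> = -(1 / (4 * C w)) * (2 * trN b w + Tb b w * Tb b w - 2 * Sb b w)"
      using trace_alg[where n=n and Gi="Gi w" and M="Mb b w" and N="Nb b w", OF Gi_sym[OF w]]
      by (simp add: Ab_def[abs_def] Tb_def Sb_def trN_def)
    finally show ?thesis .
  qed
  have "0 = (\<Sum>i<n. \<Sum>j<n. Gi w i j * Ric n G C i j w)"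
    using Ric0[OF w] by simp
  also have "\<dots> = (\<Sum>i<n. \<Sum>j<n. Gi w i j * RB (idx n True) i j w) + (\<Sum>i<n. \<Sum>j<n. Gi w i j * RB (idx n False) i j w)"
    by (simp add: Ric_split[OF w] idx_def distrib_left sum.distrib)
  also have "\<dots> = -(1 / (4 * C w)) * (2 * ((trN True w - Sb True w + Tb True w ^ 2 / 2) + (trN False w - Sb False w + Tb False w ^ 2 / 2)))"
    unfolding tb by (simp add: algebra_simps power2_eq_square)
  finally show ?thesis using Cnz[OF w] by simp
qed

end


lemma DERIV_sqrt_abs:
  assumes d: "(g has_real_derivative D) (at t)" and nz: "g t \<noteq> 0"
  shows "((\<lambda>s. sqrt \<bar>g s\<bar>) has_real_derivative sqrt \<bar>g t\<bar> * (D / g t) / 2) (at t)"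
proof -
  have pos: "0 < (g t)^2" using nz by simp
  have pos2: "0 < sqrt ((g t)^2)" using pos by simp
  have d1: "((\<lambda>s. (g s)^2) has_real_derivative 2 * g t * D) (at t)"
    using DERIV_power[OF d, of 2] by (simp add: mult_ac)
  have d2: "((\<lambda>s. sqrt ((g s)^2)) has_real_derivative inverse (sqrt ((g t)^2)) / 2 * (2 * g t * D)) (at t)"
    using DERIV_chain2[OF DERIV_real_sqrt[OF pos] d1] .
  have d3: "((\<lambda>s. sqrt (sqrt ((g s)^2))) has_real_derivative
      inverse (sqrt (sqrt ((g t)^2))) / 2 * (inverse (sqrt ((g t)^2)) / 2 * (2 * g t * D))) (at t)"
    using DERIV_chain2[OF DERIV_real_sqrt[OF pos2] d2] .
  have val: "inverse (sqrt \<bar>g t\<bar>) / 2 * (inverse \<bar>g t\<bar> / 2 * (2 * g t * D))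
      = sqrt \<bar>g t\<bar> * (D / g t) / 2"
  proof -
    define x where "x = g t"
    have nzx: "x \<noteq> 0" using nz by (simp add: x_def)
    have a: "\<bar>x\<bar> > 0" using nzx by simp
    have sq: "sqrt \<bar>x\<bar> * sqrt \<bar>x\<bar> = \<bar>x\<bar>" by simp
    have s0: "sqrt \<bar>x\<bar> > 0" using a by simp
    have "inverse (sqrt \<bar>x\<bar>) / 2 * (inverse \<bar>x\<bar> / 2 * (2 * x * D)) = x * D / (2 * sqrt \<bar>x\<bar> * \<bar>x\<bar>)"
      using a s0 by (simp add: field_simps)
    also have "\<dots> = x * D / (2 * sqrt \<bar>x\<bar> * (sqrt \<bar>x\<bar> * sqrt \<bar>x\<bar>))" by (simp only: sq)
    also have "\<dots> = sqrt \<bar>x\<bar> * (D / x) / 2"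
    proof -
      have "x * x = \<bar>x\<bar> * \<bar>x\<bar>" by simp
      then have "x * x = (sqrt \<bar>x\<bar> * sqrt \<bar>x\<bar>) * (sqrt \<bar>x\<bar> * sqrt \<bar>x\<bar>)" by (simp only: sq)
      then show ?thesis using nzx s0 by (simp add: field_simps)
    qed
    finally show ?thesis by (simp add: x_def)
  qed
  have d4: "((\<lambda>s. sqrt \<bar>g s\<bar>) has_real_derivative
      inverse (sqrt \<bar>g t\<bar>) / 2 * (inverse \<bar>g t\<bar> / 2 * (2 * g t * D))) (at t)"
    using d3 unfolding real_sqrt_abs .
  show ?thesis by (rule DERIV_cong[OF d4 val])
qed

context wsmooth begin

definition dt where "dt w = Determinant.det (matf n (\<lambda>i j. G i j w))"
definition ff where "ff w = sqrt \<bar>dt w\<bar>"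

lemma Mb_deriv:
  assumes w: "w \<in> \<Omega>" and ij: "i < n" "j < n"
  shows "((\<lambda>s. G i j (line b w s)) has_real_derivative Mb b w i j) (at (pos b w))"
  using dir_deriv[of "G i j" b w "pos b w"] Gd[OF ij w] by (simp add: Mb_def)

lemma Nb_deriv:
  assumes w: "w \<in> \<Omega>" and ij: "i < n" "j < n"
  shows "((\<lambda>s. pdir b (G i j) (line b w s)) has_real_derivative Nb b w i j) (at (pos b w))"
  using dir_deriv[of "pdir b (G i j)" b w "pos b w"] Gdd[OF ij w] by (simp add: Nb_def)

lemma dt_deriv:
  assumes w: "w \<in> \<Omega>"
  shows "((\<lambda>s. dt (line b w s)) has_real_derivative dt w * Tb b w) (at (pos b w))"
proof -
  have "((\<lambda>s. dt (line b w s)) has_real_derivative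
      (\<Sum>i<n. \<Sum>j<n. Mb b w i j * cofactor (matf n (\<lambda>i j. G i j (line b w (pos b w)))) i j)) (at (pos b w))"
    unfolding dt_def by (rule det_deriv) (use Mb_deriv[OF w] in auto)
  moreover have "(\<Sum>i<n. \<Sum>j<n. Mb b w i j * cofactor (matf n (\<lambda>i j. G i j w)) i j) = dt w * Tb b w"
  proof -
    have cf: "cofactor (matf n (\<lambda>i j. G i j w)) i j = dt w * Gi w j i" for i j
      using Gnz[OF w] by (simp add: Gi_def invm_def dt_def)
    have "(\<Sum>i<n. \<Sum>j<n. Mb b w i j * cofactor (matf n (\<lambda>i j. G i j w)) i j)
        = dt w * (\<Sum>i<n. \<Sum>j<n. Gi w j i * Mb b w i j)"
      by (simp add: cf sum_distrib_left mult_ac)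
    also have "(\<Sum>i<n. \<Sum>j<n. Gi w j i * Mb b w i j) = Tb b w"
      unfolding Tb_def Ab_def by (rule sum.swap)
    finally show ?thesis .
  qed
  ultimately show ?thesis by simp
qed

lemma ff_deriv:
  assumes w: "w \<in> \<Omega>"
  shows "((\<lambda>s. ff (line b w s)) has_real_derivative ff w * Tb b w / 2) (at (pos b w))"
proof -
  have nz: "dt w \<noteq> 0" using Gnz[OF w] by (simp add: dt_def)
  show ?thesis
    using DERIV_sqrt_abs[OF dt_deriv[OF w], of b] nz by (simp add: ff_def)
qed

lemma pdir_ff:
  assumes w: "w \<in> \<Omega>"
  shows "pdir b ff w = ff w * Tb b w / 2"
  using ff_deriv[OF w, of b] by (simp add: pdir_deriv DERIV_imp_deriv)

end

context wsmooth begin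

lemma Gi_deriv:
  assumes w: "w \<in> \<Omega>" and ij: "i < n" "j < n"
  shows "((\<lambda>s. Gi (line b w s) i j) has_real_derivative
     - (\<Sum>a<n. \<Sum>k<n. Gi w i a * Mb b w a k * Gi w k j)) (at (pos b w))"
  using invm_deriv[where F="\<lambda>i j s. G i j (line b w s)" and F'="Mb b w" and t="pos b w", OF Mb_deriv[OF w]]
    Gnz[OF w] ij by (simp add: Gi_def)

lemma sum4:
  fixes f :: "nat \<Rightarrow> nat \<Rightarrow> nat \<Rightarrow> real"
  shows "(\<Sum>d<n. \<Sum>a<n. \<Sum>l<n. f d a l) = (\<Sum>l<n. \<Sum>a<n. \<Sum>d<n. f d a l)"
proof -
  have "(\<Sum>d<n. \<Sum>a<n. \<Sum>l<n. f d a l) = (\<Sum>d<n. \<Sum>l<n. \<Sum>a<n. f d a l)"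
    by (rule sum.cong[OF refl], rule sum.swap)
  also have "\<dots> = (\<Sum>l<n. \<Sum>d<n. \<Sum>a<n. f d a l)" by (rule sum.swap)
  also have "\<dots> = (\<Sum>l<n. \<Sum>a<n. \<Sum>d<n. f d a l)"
    by (rule sum.cong[OF refl], rule sum.swap)
  finally show ?thesis .
qed

lemma Tb_deriv:
  assumes w: "w \<in> \<Omega>"
  shows "((\<lambda>s. Tb b (line b w s)) has_real_derivative trN b w - Sb b w) (at (pos b w))"
proof -
  have D1: "((\<lambda>s. \<Sum>k<n. \<Sum>d<n. Gi (line b w s) k d * pdir b (G d k) (line b w s)) has_real_derivative
      (\<Sum>k<n. \<Sum>d<n. (- (\<Sum>a<n. \<Sum>l<n. Gi w k a * Mb b w a l * Gi w l d)) * Mb b w d k + Gi w k d * Nb b w d k)) (at (pos b w))"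
  proof (intro DERIV_sum)
    fix k d assume "k \<in> {..<n}" "d \<in> {..<n}"
    then show "((\<lambda>s. Gi (line b w s) k d * pdir b (G d k) (line b w s)) has_real_derivative
      (- (\<Sum>a<n. \<Sum>l<n. Gi w k a * Mb b w a l * Gi w l d)) * Mb b w d k + Gi w k d * Nb b w d k) (at (pos b w))"
      using DERIV_mult[OF Gi_deriv[OF w, of k d b] Nb_deriv[OF w, of d k b]]
      by (simp add: Mb_def mult.commute)
  qed
  have E: "(\<Sum>k<n. \<Sum>d<n. (- (\<Sum>a<n. \<Sum>l<n. Gi w k a * Mb b w a l * Gi w l d)) * Mb b w d k + Gi w k d * Nb b w d k)
      = trN b w - Sb b w"
  proof -
    have PK: "(\<Sum>d<n. (\<Sum>a<n. \<Sum>l<n. Gi w k a * Mb b w a l * Gi w l d) * Mb b w d k) = (\<Sum>l<n. Ab b w k l * Ab b w l k)" for k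
    proof -
      have "(\<Sum>d<n. (\<Sum>a<n. \<Sum>l<n. Gi w k a * Mb b w a l * Gi w l d) * Mb b w d k)
          = (\<Sum>d<n. \<Sum>a<n. \<Sum>l<n. Gi w k a * Mb b w a l * (Gi w l d * Mb b w d k))"
        by (simp add: sum_distrib_right mult.assoc)
      also have "\<dots> = (\<Sum>l<n. \<Sum>a<n. \<Sum>d<n. Gi w k a * Mb b w a l * (Gi w l d * Mb b w d k))"
        by (rule sum4)
      also have "\<dots> = (\<Sum>l<n. Ab b w k l * Ab b w l k)"
        by (simp add: Ab_def sum_product)
      finally show ?thesis .
    qed
    have "(\<Sum>k<n. \<Sum>d<n. (- (\<Sum>a<n. \<Sum>l<n. Gi w k a * Mb b w a l * Gi w l d)) * Mb b w d k + Gi w k d * Nb b w d k)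
       = (\<Sum>k<n. (\<Sum>d<n. Gi w k d * Nb b w d k) - (\<Sum>d<n. (\<Sum>a<n. \<Sum>l<n. Gi w k a * Mb b w a l * Gi w l d) * Mb b w d k))"
      by (intro sum.cong refl) (simp add: sum.distrib sum_negf sum_subtractf)
    also have "\<dots> = (\<Sum>k<n. (\<Sum>d<n. Gi w k d * Nb b w d k) - (\<Sum>l<n. Ab b w k l * Ab b w l k))"
      by (simp only: PK)
    also have "\<dots> = trN b w - Sb b w"
      by (simp only: sum_subtractf trN_def Sb_def)
    finally show ?thesis .
  qed
  have eqf: "(\<lambda>s. Tb b (line b w s)) = (\<lambda>s. \<Sum>k<n. \<Sum>d<n. Gi (line b w s) k d * pdir b (G d k) (line b w s))"
    by (simp add: Tb_def Ab_def Mb_def)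
  show ?thesis using DERIV_cong[OF D1 E] by (simp only: eqf)
qed

end

context wsmooth begin

lemma pdir_pdir_ff:
  assumes w: "w \<in> \<Omega>"
  shows "pdir b (pdir b ff) w = ff w * (Tb b w)^2 / 4 + ff w * (trN b w - Sb b w) / 2"
proof -
  have "((\<lambda>s. ff (line b w s) * Tb b (line b w s) / 2) has_real_derivative
      ((ff w * Tb b w / 2) * Tb b w + ff w * (trN b w - Sb b w)) / 2) (at (pos b w))"
  proof -
    have DM: "((\<lambda>s. ff (line b w s) * Tb b (line b w s)) has_real_derivative
       (ff w * Tb b w / 2) * Tb b (line b w (pos b w)) + (trN b w - Sb b w) * ff (line b w (pos b w))) (at (pos b w))"
      by (rule DERIV_mult[OF ff_deriv[OF w] Tb_deriv[OF w]])
    have lp: "line b w (pos b w) = w" by (rule line_pos)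
    have DM2: "((\<lambda>s. ff (line b w s) * Tb b (line b w s)) has_real_derivative
       (ff w * Tb b w / 2) * Tb b w + ff w * (trN b w - Sb b w)) (at (pos b w))"
      using DM unfolding lp by (simp only: mult.commute[of "trN b w - Sb b w"])
    show ?thesis using DERIV_cdivide[OF DM2, of 2] by simp
  qed
  moreover have "eventually (\<lambda>s. pdir b ff (line b w s) = ff (line b w s) * Tb b (line b w s) / 2) (nhds (pos b w))"
    using line_in[OF w] by eventually_elim (rule pdir_ff)
  ultimately have "((\<lambda>s. pdir b ff (line b w s)) has_real_derivative
      ((ff w * Tb b w / 2) * Tb b w + ff w * (trN b w - Sb b w)) / 2) (at (pos b w))"
    by (subst DERIV_cong_ev[OF refl _ refl]) auto
  then have "pdir b (pdir b ff) w = ((ff w * Tb b w / 2) * Tb b w + ff w * (trN b w - Sb b w)) / 2"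
    by (simp add: pdir_deriv DERIV_imp_deriv)
  then show ?thesis by (simp add: power2_eq_square algebra_simps add_divide_distrib diff_divide_distrib)
qed

lemma harmonic:
  assumes w: "w \<in> \<Omega>"
  shows "pdir True (pdir True ff) w + pdir False (pdir False ff) w = 0"
proof -
  have "pdir True (pdir True ff) w + pdir False (pdir False ff) w
      = ff w / 2 * ((trN True w - Sb True w + Tb True w ^ 2 / 2) + (trN False w - Sb False w + Tb False w ^ 2 / 2))"
    unfolding pdir_pdir_ff[OF w] by (simp add: power2_eq_square algebra_simps add_divide_distrib diff_divide_distrib)
  also have "\<dots> = 0" using trace_identity[OF w] by simp
  finally show ?thesis .
qed

end


lemma pu_deriv:
  assumes "f differentiable (at (s,y))"
  shows "((\<lambda>s. f (s,y)) has_real_derivative pu f (s,y)) (at s)"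
  using dir_deriv[of f True "(s,y)" s] assms by (simp add: line_def pdir_def)

lemma pv_deriv:
  assumes "f differentiable (at (x,t))"
  shows "((\<lambda>t. f (x,t)) has_real_derivative pv f (x,t)) (at t)"
  using dir_deriv[of f False "(x,t)" t] assms by (simp add: line_def pdir_def)

lemma norm_box:
  assumes "a \<le> s" "s \<le> a + h" "b \<le> t" "t \<le> b + h"
  shows "norm ((s,t) - (a,b::real)) \<le> 2 * h"
proof -
  have "norm ((s,t) - (a,b)) = norm (s - a, t - b)" by simp
  also have "\<dots> \<le> norm (s - a) + norm (t - b)" by (rule norm_Pair_le)
  also have "\<dots> \<le> 2 * h" using assms by simp
  finally show ?thesis .
qed

lemma schwarz:
  fixes f :: "real \<times> real \<Rightarrow> real"
  assumes S: "open S" "(a,b) \<in> S" and fd: "\<And>z. z \<in> S \<Longrightarrow> f differentiable (at z)"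
    and pud: "pu f differentiable (at (a,b))" and pvd: "pv f differentiable (at (a,b))"
  shows "pv (pu f) (a,b) = pu (pv f) (a,b)"
proof (rule ccontr)
  assume ne: "pv (pu f) (a,b) \<noteq> pu (pv f) (a,b)"
  define Pu where "Pu = pu (pu f) (a,b)"
  define Pv where "Pv = pv (pu f) (a,b)"
  define Qu where "Qu = pu (pv f) (a,b)"
  define Qv where "Qv = pv (pv f) (a,b)"
  define e where "e = \<bar>Pv - Qu\<bar> / 10"
  have epos: "e > 0" using ne by (simp add: e_def Pv_def Qu_def)
  have dP: "(pu f has_derivative (\<lambda>h. Pu * fst h + Pv * snd h)) (at (a,b))"
    using frechet_partials[OF pud] by (simp add: Pu_def Pv_def)
  have dQ: "(pv f has_derivative (\<lambda>h. Qu * fst h + Qv * snd h)) (at (a,b))"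
    using frechet_partials[OF pvd] by (simp add: Qu_def Qv_def)
  obtain d1 where d1: "d1 > 0" and D1: "\<And>y. norm (y - (a,b)) < d1 \<Longrightarrow>
      \<bar>pu f y - pu f (a,b) - (Pu * fst (y - (a,b)) + Pv * snd (y - (a,b)))\<bar> \<le> e * norm (y - (a,b))"
    using dP[unfolded has_derivative_at_alt] epos by (metis real_norm_def)
  obtain d2 where d2: "d2 > 0" and D2: "\<And>y. norm (y - (a,b)) < d2 \<Longrightarrow>
      \<bar>pv f y - pv f (a,b) - (Qu * fst (y - (a,b)) + Qv * snd (y - (a,b)))\<bar> \<le> e * norm (y - (a,b))"
    using dQ[unfolded has_derivative_at_alt] epos by (metis real_norm_def)
  obtain r where r: "r > 0" "ball (a,b) r \<subseteq> S"
    using S openE by blast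
  define h where "h = min (min d1 d2) r / 4"
  have hpos: "h > 0" using d1 d2 r by (simp add: h_def)
  have h1: "2 * h < d1" "2 * h < d2" "2 * h < r" using d1 d2 r by (auto simp: h_def)
  have inS: "(s,t) \<in> S" if "a \<le> s" "s \<le> a + h" "b \<le> t" "t \<le> b + h" for s t
  proof -
    have "dist (a,b) (s,t) = norm ((s,t) - (a,b))" by (simp only: dist_norm) (rule norm_minus_commute)
    also have "\<dots> \<le> 2 * h" by (rule norm_box[OF that])
    finally have "(s,t) \<in> ball (a,b) r" using h1 by simp
    then show ?thesis using r by blast
  qed
  have bnd: "norm ((s,t) - (a,b)) \<le> 2 * h" if "a \<le> s" "s \<le> a + h" "b \<le> t" "t \<le> b + h" for s t
    by (rule norm_box[OF that])
  obtain xi where xi: "a < xi" "xi < a + h"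
    and mv1: "(f (a+h, b+h) - f (a+h, b)) - (f (a, b+h) - f (a, b)) = h * (pu f (xi, b+h) - pu f (xi, b))"
  proof -
    have "\<exists>z. a < z \<and> z < a + h \<and> (f (a+h, b+h) - f (a+h, b)) - (f (a, b+h) - f (a, b)) = (a + h - a) * (pu f (z, b+h) - pu f (z, b))"
    proof (rule MVT2[where f="\<lambda>s. f (s, b+h) - f (s, b)"])
      show "a < a + h" using hpos by simp
      fix s assume "a \<le> s" "s \<le> a + h"
      then have "(s, b+h) \<in> S" "(s, b) \<in> S" using inS hpos by auto
      then show "((\<lambda>s. f (s, b+h) - f (s, b)) has_real_derivative pu f (s, b+h) - pu f (s, b)) (at s)"
        by (intro DERIV_diff pu_deriv fd)
    qed
    then show ?thesis using that by auto
  qed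
  obtain eta where eta: "b < eta" "eta < b + h"
    and mv2: "(f (a+h, b+h) - f (a, b+h)) - (f (a+h, b) - f (a, b)) = h * (pv f (a+h, eta) - pv f (a, eta))"
  proof -
    have "\<exists>z. b < z \<and> z < b + h \<and> (f (a+h, b+h) - f (a, b+h)) - (f (a+h, b) - f (a, b)) = (b + h - b) * (pv f (a+h, z) - pv f (a, z))"
    proof (rule MVT2[where f="\<lambda>t. f (a+h, t) - f (a, t)"])
      show "b < b + h" using hpos by simp
      fix t assume "b \<le> t" "t \<le> b + h"
      then have "(a+h, t) \<in> S" "(a, t) \<in> S" using inS hpos by auto
      then show "((\<lambda>t. f (a+h, t) - f (a, t)) has_real_derivative pv f (a+h, t) - pv f (a, t)) (at t)"
        by (intro DERIV_diff pv_deriv fd)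
    qed
    then show ?thesis using that by auto
  qed
  have XY: "pu f (xi, b+h) - pu f (xi, b) = pv f (a+h, eta) - pv f (a, eta)"
  proof -
    have "h * (pu f (xi, b+h) - pu f (xi, b)) = h * (pv f (a+h, eta) - pv f (a, eta))"
      using mv1 mv2 by linarith
    then show ?thesis using hpos by simp
  qed
  have A1: "\<bar>pu f (xi, b+h) - pu f (a,b) - (Pu * (xi - a) + Pv * h)\<bar> \<le> e * (2 * h)"
  proof -
    have n: "norm ((xi, b+h) - (a,b)) \<le> 2 * h" using bnd[of xi "b+h"] xi hpos by simp
    have "\<bar>pu f (xi, b+h) - pu f (a,b) - (Pu * (xi - a) + Pv * h)\<bar> \<le> e * norm ((xi, b+h) - (a,b))"
      using D1[of "(xi, b+h)"] n h1 by simp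
    also have "\<dots> \<le> e * (2 * h)" using n epos by (simp add: mult_left_mono)
    finally show ?thesis .
  qed
  have A2: "\<bar>pu f (xi, b) - pu f (a,b) - (Pu * (xi - a))\<bar> \<le> e * (2 * h)"
  proof -
    have n: "norm ((xi, b) - (a,b)) \<le> 2 * h" using bnd[of xi b] xi hpos by simp
    have "\<bar>pu f (xi, b) - pu f (a,b) - (Pu * (xi - a))\<bar> \<le> e * norm ((xi, b) - (a,b))"
      using D1[of "(xi, b)"] n h1 by simp
    also have "\<dots> \<le> e * (2 * h)" using n epos by (simp add: mult_left_mono)
    finally show ?thesis .
  qed
  have B1: "\<bar>pv f (a+h, eta) - pv f (a,b) - (Qu * h + Qv * (eta - b))\<bar> \<le> e * (2 * h)"
  proof -
    have n: "norm ((a+h, eta) - (a,b)) \<le> 2 * h" using bnd[of "a+h" eta] eta hpos by simp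
    have "\<bar>pv f (a+h, eta) - pv f (a,b) - (Qu * h + Qv * (eta - b))\<bar> \<le> e * norm ((a+h, eta) - (a,b))"
      using D2[of "(a+h, eta)"] n h1 by simp
    also have "\<dots> \<le> e * (2 * h)" using n epos by (simp add: mult_left_mono)
    finally show ?thesis .
  qed
  have B2: "\<bar>pv f (a, eta) - pv f (a,b) - (Qv * (eta - b))\<bar> \<le> e * (2 * h)"
  proof -
    have n: "norm ((a, eta) - (a,b)) \<le> 2 * h" using bnd[of a eta] eta hpos by simp
    have "\<bar>pv f (a, eta) - pv f (a,b) - (Qv * (eta - b))\<bar> \<le> e * norm ((a, eta) - (a,b))"
      using D2[of "(a, eta)"] n h1 by simp
    also have "\<dots> \<le> e * (2 * h)" using n epos by (simp add: mult_left_mono)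
    finally show ?thesis .
  qed
  have "\<bar>Pv * h - Qu * h\<bar> \<le> 8 * e * h"
    using A1 A2 B1 B2 XY by (simp add: abs_le_iff)
  moreover have "\<bar>Pv * h - Qu * h\<bar> = \<bar>Pv - Qu\<bar> * h"
    using hpos by (simp add: left_diff_distrib[symmetric] abs_mult)
  ultimately have "\<bar>Pv - Qu\<bar> * h \<le> (8 * e) * h" by simp
  then have "\<bar>Pv - Qu\<bar> \<le> 8 * e"
    using hpos by (rule mult_right_le_imp_le)
  then show False using epos by (simp add: e_def)
qed



lemma reim_has_derivative: "((\<lambda>z. (Re z, Im z)) has_derivative (\<lambda>h. (Re h, Im h))) (at z)"
  by (intro has_derivative_Pair bounded_linear.has_derivative[OF bounded_linear_Re has_derivative_ident]
        bounded_linear.has_derivative[OF bounded_linear_Im has_derivative_ident])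

lemma cr_holo:
  fixes P Q :: "real \<times> real \<Rightarrow> real"
  assumes dP: "(P has_derivative (\<lambda>h. Pu * fst h + Pv * snd h)) (at (Re z, Im z))"
    and dQ: "(Q has_derivative (\<lambda>h. Qu * fst h + Qv * snd h)) (at (Re z, Im z))"
    and cr1: "Qv = Pu" and cr2: "Pv = - Qu"
  shows "((\<lambda>z. Complex (P (Re z, Im z)) (Q (Re z, Im z))) has_field_derivative Complex Pu Qu) (at z)"
proof -
  have d1: "((\<lambda>z. P (Re z, Im z)) has_derivative (\<lambda>h. Pu * Re h + Pv * Im h)) (at z)"
    using diff_chain_at[OF reim_has_derivative dP] by (simp add: o_def)
  have d2: "((\<lambda>z. Q (Re z, Im z)) has_derivative (\<lambda>h. Qu * Re h + Qv * Im h)) (at z)"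
    using diff_chain_at[OF reim_has_derivative dQ] by (simp add: o_def)
  have d3: "((\<lambda>z. complex_of_real (P (Re z, Im z)) + \<i> * complex_of_real (Q (Re z, Im z))) has_derivative
      (\<lambda>h. complex_of_real (Pu * Re h + Pv * Im h) + \<i> * complex_of_real (Qu * Re h + Qv * Im h))) (at z)"
    by (intro has_derivative_add has_derivative_mult_right has_derivative_of_real d1 d2)
  have e: "(\<lambda>h. complex_of_real (Pu * Re h + Pv * Im h) + \<i> * complex_of_real (Qu * Re h + Qv * Im h))
      = (*) (Complex Pu Qu)"
    by (rule ext) (simp add: complex_eq_iff cr1 cr2)
  show ?thesis
    unfolding has_field_derivative_def using d3 unfolding e by (simp add: Complex_eq)
qed

lemma dist_complex_pair: "dist (Complex a b) (Complex c d) = dist (a, b) (c, d)"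
proof -
  have "Complex a b - Complex c d = Complex (a - c) (b - d)" by (simp add: complex_eq_iff)
  then show ?thesis by (simp add: dist_complex_def dist_prod_def complex_norm dist_real_def power2_abs)
qed

lemma final_generic:
  fixes f :: "real \<times> real \<Rightarrow> real" and \<Omega> :: "(real \<times> real) set"
  assumes opn: "open \<Omega>" and conn: "connected \<Omega>"
    and fd: "\<And>w. w \<in> \<Omega> \<Longrightarrow> f differentiable (at w)"
    and pud: "\<And>w. w \<in> \<Omega> \<Longrightarrow> pu f differentiable (at w)"
    and pvd: "\<And>w. w \<in> \<Omega> \<Longrightarrow> pv f differentiable (at w)"
    and harm: "\<And>w. w \<in> \<Omega> \<Longrightarrow> pu (pu f) w + pv (pv f) w = 0"
  shows "(\<exists>c. \<forall>w\<in>\<Omega>. f w = c) \<or> (\<forall>w\<in>\<Omega>. \<forall>\<^sub>F z in at w. (pu f z, pv f z) \<noteq> (0, 0))"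
proof -
  define g where "g z = Complex (pu f (Re z, Im z)) (- pv f (Re z, Im z))" for z
  define \<Omega>c where "\<Omega>c = (\<lambda>w. Complex (fst w) (snd w)) ` \<Omega>"
  have memc: "z \<in> \<Omega>c \<longleftrightarrow> (Re z, Im z) \<in> \<Omega>" for z
  proof
    assume "z \<in> \<Omega>c" then show "(Re z, Im z) \<in> \<Omega>" by (auto simp: \<Omega>c_def)
  next
    assume "(Re z, Im z) \<in> \<Omega>"
    then have "Complex (fst (Re z, Im z)) (snd (Re z, Im z)) \<in> \<Omega>c" unfolding \<Omega>c_def by (rule imageI)
    then show "z \<in> \<Omega>c" by simp
  qed
  have vim: "\<Omega>c = (\<lambda>z. (Re z, Im z)) -` \<Omega>" using memc by auto
  have openc: "open \<Omega>c"
    unfolding vim by (rule continuous_open_vimage[OF opn])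
      (intro continuous_intros linear_continuous_at[OF bounded_linear_Re] linear_continuous_at[OF bounded_linear_Im])
  have cc: "(\<lambda>w. Complex (fst w) (snd w)) = (\<lambda>w. complex_of_real (fst w) + \<i> * complex_of_real (snd w))"
    by (simp add: Complex_eq)
  have connc: "connected \<Omega>c"
    unfolding \<Omega>c_def cc by (rule connected_continuous_image[OF _ conn]) (intro continuous_intros)
  have holo: "g holomorphic_on \<Omega>c"
    unfolding holomorphic_on_open[OF openc]
  proof
    fix z assume z: "z \<in> \<Omega>c"
    then have w: "(Re z, Im z) \<in> \<Omega>" using memc by simp
    have dP: "(pu f has_derivative (\<lambda>h. pu (pu f) (Re z, Im z) * fst h + pv (pu f) (Re z, Im z) * snd h)) (at (Re z, Im z))"
      by (rule frechet_partials[OF pud[OF w]])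
    have dQ0: "(pv f has_derivative (\<lambda>h. pu (pv f) (Re z, Im z) * fst h + pv (pv f) (Re z, Im z) * snd h)) (at (Re z, Im z))"
      by (rule frechet_partials[OF pvd[OF w]])
    have dQ: "((\<lambda>w. - pv f w) has_derivative (\<lambda>h. (- pu (pv f) (Re z, Im z)) * fst h + (- pv (pv f) (Re z, Im z)) * snd h)) (at (Re z, Im z))"
      using has_derivative_minus[OF dQ0] by simp
    have sw: "pv (pu f) (Re z, Im z) = pu (pv f) (Re z, Im z)"
      by (rule schwarz[OF opn w fd pud[OF w] pvd[OF w]])
    have "(g has_field_derivative Complex (pu (pu f) (Re z, Im z)) (- pu (pv f) (Re z, Im z))) (at z)"
      unfolding g_def[abs_def]
      by (rule cr_holo[OF dP dQ]) (use harm[OF w] sw in auto)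
    then show "\<exists>f'. (g has_field_derivative f') (at z)" by blast
  qed
  show ?thesis
  proof (cases "\<forall>z\<in>\<Omega>c. g z = 0")
    case True
    have zero: "pu f w = 0 \<and> pv f w = 0" if w: "w \<in> \<Omega>" for w
    proof -
      have "Complex (fst w) (snd w) \<in> \<Omega>c" using w by (simp add: memc)
      then have "g (Complex (fst w) (snd w)) = 0" using True by blast
      then show ?thesis by (simp add: g_def complex_eq_iff)
    qed
    have "f constant_on \<Omega>"
    proof (rule has_derivative_zero_connected_constant_on[OF conn opn, of "{}"])
      show "finite {}" by simp
      show "continuous_on \<Omega> f"
        by (rule differentiable_imp_continuous_on) (simp add: differentiable_on_eq_differentiable_at[OF opn] fd)
      show "\<forall>x\<in>\<Omega> - {}. (f has_derivative (\<lambda>h. 0)) (at x within \<Omega>)"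
      proof
        fix x assume "x \<in> \<Omega> - {}"
        then have x: "x \<in> \<Omega>" by simp
        have "(f has_derivative (\<lambda>h. pu f x * fst h + pv f x * snd h)) (at x)"
          by (rule frechet_partials[OF fd[OF x]])
        then show "(f has_derivative (\<lambda>h. 0)) (at x within \<Omega>)"
          using zero[OF x] by (simp add: has_derivative_at_withinI)
      qed
    qed
    then show ?thesis by (auto simp: constant_on_def)
  next
    case False
    then obtain be where be: "be \<in> \<Omega>c" "g be \<noteq> 0" by blast
    have "\<forall>\<^sub>F x in at w. (pu f x, pv f x) \<noteq> (0, 0)" if w: "w \<in> \<Omega>" for w
    proof (cases "pu f w = 0 \<and> pv f w = 0")
      case True
      define z where "z = Complex (fst w) (snd w)"
      have zc: "z \<in> \<Omega>c" using w by (simp add: memc z_def)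
      have gz: "g z = 0" using True by (simp add: g_def z_def complex_eq_iff)
      obtain r where r: "0 < r" "\<And>y. y \<in> ball z r - {z} \<Longrightarrow> g y \<noteq> 0"
        using isolated_zeros[OF holo openc connc zc gz be] by blast
      show ?thesis
        unfolding eventually_at
      proof (intro exI[of _ r] conjI ballI impI)
        show "0 < r" by (rule r(1))
        fix x :: "real \<times> real" assume x: "x \<noteq> w \<and> dist x w < r"
        have "Complex (fst x) (snd x) \<in> ball z r - {z}"
        proof -
          have "dist z (Complex (fst x) (snd x)) = dist w x"
            by (simp add: z_def dist_complex_pair)
          then have "dist z (Complex (fst x) (snd x)) < r" using x by (simp add: dist_commute)
          moreover have "Complex (fst x) (snd x) \<noteq> z"
            using x by (auto simp: z_def prod_eq_iff)
          ultimately show ?thesis by simp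
        qed
        then have "g (Complex (fst x) (snd x)) \<noteq> 0" by (rule r(2))
        then show "(pu f x, pv f x) \<noteq> (0, 0)" by (auto simp: g_def complex_eq_iff)
      qed
    next
      case False
      then show ?thesis
      proof (cases "pu f w = 0")
        case False
        have "isCont (pu f) w" using pud[OF w] differentiable_imp_continuous_within by blast
        then have "\<forall>\<^sub>F x in at w. pu f x \<noteq> 0"
          using False unfolding isCont_def by (rule tendsto_imp_eventually_ne)
        then show ?thesis by eventually_elim auto
      next
        case True
        with False have ne: "pv f w \<noteq> 0" by simp
        have "isCont (pv f) w" using pvd[OF w] differentiable_imp_continuous_within by blast
        then have "\<forall>\<^sub>F x in at w. pv f x \<noteq> 0"
          using ne unfolding isCont_def by (rule tendsto_imp_eventually_ne)
        then show ?thesis by eventually_elim auto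
      qed
    qed
    then show ?thesis by blast
  qed
qed



lemma pdir_True: "pdir True H = pu H" by (rule ext) (simp add: pdir_def)
lemma pdir_False: "pdir False H = pv H" by (rule ext) (simp add: pdir_def)

lemma sqrt_differentiable: "0 < x \<Longrightarrow> sqrt differentiable (at x)"
  using DERIV_real_sqrt real_differentiable_def by blast

context wsmooth begin

lemma dt_differentiable: "w \<in> \<Omega> \<Longrightarrow> dt differentiable (at w)"
  unfolding dt_def[abs_def] by (rule det_differentiable) (rule Gd)

lemma ff_differentiable:
  assumes w: "w \<in> \<Omega>"
  shows "ff differentiable (at w)"
proof -
  have e: "ff = (\<lambda>w. sqrt (sqrt ((dt w)^2)))" by (rule ext) (simp add: ff_def)
  have nz: "dt w \<noteq> 0" using Gnz[OF w] by (simp add: dt_def)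
  have d1: "(\<lambda>w. (dt w)^2) differentiable (at w)"
    by (rule differentiable_power[OF dt_differentiable[OF w]])
  have d2: "(\<lambda>w. sqrt ((dt w)^2)) differentiable (at w)"
    by (rule differentiable_compose[OF sqrt_differentiable d1]) (use nz in simp)
  have d3: "(\<lambda>w. sqrt (sqrt ((dt w)^2))) differentiable (at w)"
    by (rule differentiable_compose[OF sqrt_differentiable d2]) (use nz in simp)
  show ?thesis unfolding e by (rule d3)
qed

lemma Tb_differentiable:
  assumes w: "w \<in> \<Omega>"
  shows "Tb b differentiable (at w)"
proof -
  have e: "Tb b = (\<lambda>w. \<Sum>k<n. \<Sum>d<n. invm n (\<lambda>i j. G i j w) k d * pdir b (G d k) w)"
    by (rule ext) (simp add: Tb_def Ab_def Mb_def Gi_def)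
  show ?thesis unfolding e
    by (intro differentiable_sum ballI finite_lessThan differentiable_mult invm_differentiable Gd Gdd w)
      (auto simp: Gnz[OF w])
qed

lemma pdir_ff_differentiable:
  assumes w: "w \<in> \<Omega>"
  shows "pdir b ff differentiable (at w)"
proof -
  have h: "(\<lambda>w. ff w * Tb b w / 2) differentiable (at w)"
    by (intro differentiable_divide differentiable_mult ff_differentiable Tb_differentiable w differentiable_const) simp
  obtain r where r: "r > 0" "ball w r \<subseteq> \<Omega>" using opn w openE by blast
  show ?thesis
  proof (rule differentiable_transform_within[OF h r(1)])
    show "w \<in> UNIV" by simp
    fix x' assume "x' \<in> UNIV" "dist x' w < r"
    then have "x' \<in> \<Omega>" using r by (auto simp: dist_commute)
    then show "ff x' * Tb b x' / 2 = pdir b ff x'" by (simp add: pdir_ff)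
  qed
qed

end

theorem mainTheorem10:
  fixes n :: nat
    and G :: "nat \<Rightarrow> nat \<Rightarrow> real \<times> real \<Rightarrow> real"
    and C :: "real \<times> real \<Rightarrow> real"
    and \<Omega> :: "(real \<times> real) set"
  assumes domain: "open \<Omega>" "connected \<Omega>" "simply_connected \<Omega>"
    and smooth_G: "\<And>i j. i < n \<Longrightarrow> j < n \<Longrightarrow> smooth2_on \<Omega> (G i j)"
    and smooth_C: "smooth2_on \<Omega> C"
    and sym_G: "\<And>i j w. i < n \<Longrightarrow> j < n \<Longrightarrow> w \<in> \<Omega> \<Longrightarrow> G i j w = G j i w"
    and nondeg_G: "\<And>w. w \<in> \<Omega> \<Longrightarrow> detn n (\<lambda>i j. G i j w) \<noteq> 0"
    and nondeg_C: "\<And>w. w \<in> \<Omega> \<Longrightarrow> C w \<noteq> 0"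
    and ricci_flat: "\<And>p a b. (p n, p (Suc n)) \<in> \<Omega> \<Longrightarrow> a < n + 2 \<Longrightarrow> b < n + 2 \<Longrightarrow>
                       ricci (n + 2) (warped_metric n G C) a b p = 0"
  defines "f \<equiv> (\<lambda>w. sqrt \<bar>detn n (\<lambda>i j. G i j w)\<bar>)"
  shows "(\<exists>c. \<forall>w\<in>\<Omega>. f w = c) \<or>
         (\<forall>w\<in>\<Omega>. \<forall>\<^sub>F z in at w. (pu f z, pv f z) \<noteq> (0, 0))"
proof -
  have C2: "H differentiable_on \<Omega> \<and> pu H differentiable_on \<Omega> \<and> pv H differentiable_on \<Omega>"
    if "smooth2_on \<Omega> H" for H
  proof -
    have "Ck_on (Suc (Suc 0)) \<Omega> H" using that by (simp add: smooth2_on_def)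
    then show ?thesis by simp
  qed
  have Gd: "G i j differentiable (at w)" if "i < n" "j < n" "w \<in> \<Omega>" for i j w
    using C2[OF smooth_G[OF that(1,2)]] that(3) differentiable_on_eq_differentiable_at[OF domain(1)] by blast
  have Gdd: "pdir b (G i j) differentiable (at w)" if "i < n" "j < n" "w \<in> \<Omega>" for i j b w
    using C2[OF smooth_G[OF that(1,2)]] that(3) differentiable_on_eq_differentiable_at[OF domain(1)]
    by (cases b) (auto simp: pdir_True pdir_False)
  have Cd: "C differentiable (at w)" if "w \<in> \<Omega>" for w
    using C2[OF smooth_C] that differentiable_on_eq_differentiable_at[OF domain(1)] by blast
  have Ric0: "Ric n G C i j w = 0" if "w \<in> \<Omega>" "i < n" "j < n" for i j w
  proof -
    define p where "p = (\<lambda>k. if k = n then fst w else if k = Suc n then snd w else (0::real))"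
    have pw: "(p n, p (Suc n)) = w" by (simp add: p_def)
    have "ricci (n + 2) (warped_metric n G C) i j p = 0"
      using ricci_flat[of p i j] pw that by simp
    then show ?thesis using ricci_eq[of n G C i j p] pw by simp
  qed
  interpret ws: wsmooth n G C \<Omega>
  proof
    show "open \<Omega>" by (rule domain(1))
    show "\<And>w. w \<in> \<Omega> \<Longrightarrow> Determinant.det (matf n (\<lambda>i j. G i j w)) \<noteq> 0"
      using nondeg_G by (simp add: detn_eq)
  qed (use nondeg_C sym_G Gd Gdd Cd Ric0 in auto)
  have ff: "f = ws.ff"
    by (rule ext) (simp add: f_def ws.ff_def ws.dt_def detn_eq)
  show ?thesis unfolding ff
  proof (rule final_generic[OF domain(1,2)])
    fix w assume w: "w \<in> \<Omega>"
    show "ws.ff differentiable (at w)" by (rule ws.ff_differentiable[OF w])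
    show "pu ws.ff differentiable (at w)" using ws.pdir_ff_differentiable[OF w, of True] by (simp add: pdir_True)
    show "pv ws.ff differentiable (at w)" using ws.pdir_ff_differentiable[OF w, of False] by (simp add: pdir_False)
    show "pu (pu ws.ff) w + pv (pv ws.ff) w = 0" using ws.harmonic[OF w] by (simp add: pdir_True pdir_False)
  qed
qed


end
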